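(* Let $X$ have a shrinking $K$-unconditional finite dimensional decomposition and let $T$ be a bounded linear operator from $X$ onto a Banach space $Y$. Then $Y$ contains a subspace isomorphic to $c_0$ if and only if $T$ fixes a copy of $c_0$, i.e. there is a subspace $Z\subseteq X$ isomorphic to $c_0$ such that $T|_Z$ is an isomorphism onto its image.
   Context: A finite dimensional decomposition $(E_i)$ of $X$ is $K$-unconditional if $\|\sum \pm x_i\|\le K\|\sum x_i\|$ for all $x_i\in E_i$ and all choices of signs; it is shrinking if $(E_i^* )$ gives an f.d.d. of $X^*$. *)

theory Defs
  imports "HOL-Analysis.Analysis"
begin

definition fin_dim_subspace :: "'a::real_normed_vector set \<Rightarrow> bool" where
  "fin_dim_subspace S \<longleftrightarrow> subspace S \<and> (\<exists>B. finite B \<and> S = span B)"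

definition is_fdd :: "(nat \<Rightarrow> 'a::real_normed_vector set) \<Rightarrow> bool" where
  "is_fdd E \<longleftrightarrow> (\<forall>n. fin_dim_subspace (E n)) \<and>
     (\<forall>x. \<exists>!u. (\<forall>n. u n \<in> E n) \<and> u sums x)"

definition fdd_proj :: "(nat \<Rightarrow> 'a::real_normed_vector set) \<Rightarrow> nat \<Rightarrow> 'a \<Rightarrow> 'a" where
  "fdd_proj E n x = (THE u. (\<forall>k. u k \<in> E k) \<and> u sums x) n"

text \<open>The dual subspaces E n* = range of the adjoint of P n inside X*,
i.e. the functionals g with g = g o P n.\<close>
definition fdd_dual :: "(nat \<Rightarrow> 'a::real_normed_vector set) \<Rightarrow> nat \<Rightarrow> ('a \<Rightarrow>\<^sub>L real) set" where
  "fdd_dual E n = {g. \<forall>x. blinfun_apply g x = blinfun_apply g (fdd_proj E n x)}"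

definition shrinking_fdd :: "(nat \<Rightarrow> 'a::real_normed_vector set) \<Rightarrow> bool" where
  "shrinking_fdd E \<longleftrightarrow> is_fdd E \<and> is_fdd (fdd_dual E)"

definition unconditional_fdd :: "real \<Rightarrow> (nat \<Rightarrow> 'a::real_normed_vector set) \<Rightarrow> bool" where
  "unconditional_fdd K E \<longleftrightarrow> is_fdd E \<and>
     (\<forall>n (x::nat \<Rightarrow> 'a) (s::nat \<Rightarrow> real). (\<forall>i. x i \<in> E i) \<longrightarrow> (\<forall>i. s i = 1 \<or> s i = -1) \<longrightarrow>
        norm (\<Sum>i<n. s i *\<^sub>R x i) \<le> K * norm (\<Sum>i<n. x i))"

definition c0 :: "(nat \<Rightarrow> real) set" where
  "c0 = {a. a \<longlonglongrightarrow> 0}"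

definition sup_norm :: "(nat \<Rightarrow> real) \<Rightarrow> real" where
  "sup_norm a = (SUP n. \<bar>a n\<bar>)"

text \<open>J is an isomorphic embedding of c_0 into a normed space; its image J ` c0
is then a subspace isomorphic to c_0 (and every such subspace arises this way).\<close>
definition c0_embedding :: "((nat \<Rightarrow> real) \<Rightarrow> 'b::real_normed_vector) \<Rightarrow> bool" where
  "c0_embedding J \<longleftrightarrow>
     (\<forall>a\<in>c0. \<forall>b\<in>c0. J (\<lambda>n. a n + b n) = J a + J b) \<and>
     (\<forall>c. \<forall>a\<in>c0. J (\<lambda>n. c * a n) = c *\<^sub>R J a) \<and>
     (\<exists>m M. 0 < m \<and> (\<forall>a\<in>c0. m * sup_norm a \<le> norm (J a) \<and> norm (J a) \<le> M * sup_norm a))"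

definition contains_c0 :: "'b::real_normed_vector itself \<Rightarrow> bool" where
  "contains_c0 _ \<longleftrightarrow> (\<exists>J :: (nat \<Rightarrow> real) \<Rightarrow> 'b. c0_embedding J)"

definition fixes_copy_of_c0 :: "('a::real_normed_vector \<Rightarrow> 'b::real_normed_vector) \<Rightarrow> bool" where
  "fixes_copy_of_c0 T \<longleftrightarrow> (\<exists>J :: (nat \<Rightarrow> real) \<Rightarrow> 'a. c0_embedding J \<and>
     (\<exists>m>0. \<forall>z\<in>J ` c0. m * norm z \<le> norm (T z)))"

end

theory Submission
  imports Defs "HOL-Library.Diagonal_Subsequence"
begin

definition hbA :: "'b::real_normed_vector set \<Rightarrow> ('b\<Rightarrow>real) \<Rightarrow> real \<Rightarrow> ('b \<times> real) set set" where
 "hbA V f c = {G. (\<forall>v\<in>V. (v, f v) \<in> G) \<and> (\<forall>x y z. (x,y)\<in>G \<longrightarrow> (x,z)\<in>G \<longrightarrow> y = z)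
    \<and> (\<forall>x y x' y'. (x,y)\<in>G \<longrightarrow> (x',y')\<in>G \<longrightarrow> (x+x', y+y')\<in>G)
    \<and> (\<forall>x y a. (x,y)\<in>G \<longrightarrow> (a *\<^sub>R x, a*y)\<in>G) \<and> (\<forall>x y. (x,y)\<in>G \<longrightarrow> y \<le> c * norm x)}"

lemma hbA_D:
  assumes "G \<in> hbA V f c"
  shows "\<And>v. v\<in>V \<Longrightarrow> (v, f v) \<in> G"
    and "\<And>x y z. (x,y)\<in>G \<Longrightarrow> (x,z)\<in>G \<Longrightarrow> y = z"
    and "\<And>x y x' y'. (x,y)\<in>G \<Longrightarrow> (x',y')\<in>G \<Longrightarrow> (x+x', y+y')\<in>G"
    and "\<And>x y a. (x,y)\<in>G \<Longrightarrow> (a *\<^sub>R x, a*y)\<in>G"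
    and "\<And>x y. (x,y)\<in>G \<Longrightarrow> y \<le> c * norm x"
  using assms unfolding hbA_def by blast+

lemma hb_extend:
  fixes G :: "('b::real_normed_vector \<times> real) set"
  assumes G: "G \<in> hbA V f c" and c: "c \<ge> 0" and V: "0 \<in> V"
    and x0: "\<And>y. (x0, y) \<notin> G"
  shows "\<exists>G'\<in>hbA V f c. G \<subseteq> G' \<and> G' \<noteq> G"
proof -
  have hfun: "\<And>x y z. (x,y)\<in>G \<Longrightarrow> (x,z)\<in>G \<Longrightarrow> y = z"
   and hadd: "\<And>x y x' y'. (x,y)\<in>G \<Longrightarrow> (x',y')\<in>G \<Longrightarrow> (x+x', y+y')\<in>G"
   and scl: "\<And>x y a. (x,y)\<in>G \<Longrightarrow> (a *\<^sub>R x, a*y)\<in>G"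
   and bd: "\<And>x y. (x,y)\<in>G \<Longrightarrow> y \<le> c * norm x"
   and inV: "\<And>v. v\<in>V \<Longrightarrow> (v, f v) \<in> G"
    using G unfolding hbA_def by blast+
  have zero: "(0, 0) \<in> G" using scl[OF inV[OF V], of 0] by simp
  define S where "S = {y - c * norm (u - x0) | u y. (u,y)\<in>G}"
  have key: "s \<le> c * norm (v + x0) - y'" if sS: "s \<in> S" and vy: "(v,y')\<in>G" for s v y'
  proof -
    obtain u y where s: "s = y - c * norm (u - x0)" and uy: "(u,y)\<in>G" using sS unfolding S_def by blast
    have "y + y' \<le> c * norm (u + v)" using bd[OF hadd[OF uy vy]] .
    also have "norm (u + v) \<le> norm (u - x0) + norm (v + x0)"
      using norm_triangle_ineq[of "u - x0" "v + x0"] by simp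
    hence "c * norm (u + v) \<le> c * norm (u - x0) + c * norm (v + x0)"
      using c by (metis distrib_left mult_left_mono)
    finally show ?thesis using s by linarith
  qed
  have Sne: "S \<noteq> {}" using zero S_def by blast
  have Sbdd: "bdd_above S" using key[OF _ zero] by (auto intro!: bdd_aboveI)
  define \<alpha> where "\<alpha> = Sup S"
  have a1: "y - c * norm (u - x0) \<le> \<alpha>" if "(u,y)\<in>G" for u y
    unfolding \<alpha>_def using that Sbdd by (auto intro!: cSup_upper simp: S_def)
  have a2: "\<alpha> \<le> c * norm (v + x0) - y'" if "(v,y')\<in>G" for v y'
    unfolding \<alpha>_def by (rule cSup_least[OF Sne]) (rule key[OF _ that])
  define G' where "G' = {(u + t *\<^sub>R x0, y + t*\<alpha>) | u y t. (u,y)\<in>G}"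
  have G'I: "(u + t *\<^sub>R x0, y + t*\<alpha>) \<in> G'" if "(u,y)\<in>G" for u y t
    unfolding G'_def using that by blast
  have sub: "G \<subseteq> G'" unfolding G'_def by force
  have new: "(x0, \<alpha>) \<in> G'" unfolding G'_def using zero by force
  have neq: "G' \<noteq> G" using new x0 by blast
  have uniq: "t = t' \<and> u = u'" if "(u,y)\<in>G" "(u',y')\<in>G" "u + t *\<^sub>R x0 = u' + t' *\<^sub>R x0" for u y u' y' t t'
  proof (cases "t = t'")
    case True thus ?thesis using that by simp
  next
    case False
    have d: "(u' + (-1) *\<^sub>R u, y' + (-1) * y) \<in> G" using hadd[OF that(2) scl[OF that(1)]] .
    have "(t - t') *\<^sub>R x0 = u' - u" using that(3) by (simp add: algebra_simps)
    hence "(1/(t-t')) *\<^sub>R ((t - t') *\<^sub>R x0) = (1/(t-t')) *\<^sub>R (u' - u)" by simp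
    hence "x0 = (1/(t-t')) *\<^sub>R (u' + (-1) *\<^sub>R u)" using False by simp
    hence "(x0, (1/(t-t')) * (y' + (-1) * y)) \<in> G" using scl[OF d, of "1/(t-t')"] by simp
    thus ?thesis using x0 by blast
  qed
  have "G' \<in> hbA V f c"
    unfolding hbA_def
  proof (intro CollectI conjI allI impI ballI)
    fix v assume "v \<in> V" thus "(v, f v) \<in> G'" using sub inV by blast
  next
    fix x y z assume "(x,y)\<in>G'" "(x,z)\<in>G'"
    then obtain u1 y1 t1 u2 y2 t2 where "x = u1 + t1 *\<^sub>R x0" "y = y1 + t1*\<alpha>" "(u1,y1)\<in>G"
      "x = u2 + t2 *\<^sub>R x0" "z = y2 + t2*\<alpha>" "(u2,y2)\<in>G" unfolding G'_def by blast
    hence "t1 = t2 \<and> u1 = u2" using uniq[of u1 y1 u2 y2 t1 t2] by simp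
    thus "y = z" using hfun \<open>(u1,y1)\<in>G\<close> \<open>(u2,y2)\<in>G\<close> \<open>y = y1 + t1*\<alpha>\<close> \<open>z = y2 + t2*\<alpha>\<close> by blast
  next
    fix x y x' y' assume "(x,y)\<in>G'" "(x',y')\<in>G'"
    then obtain u1 y1 t1 u2 y2 t2 where "x = u1 + t1 *\<^sub>R x0" "y = y1 + t1*\<alpha>" "(u1,y1)\<in>G"
      "x' = u2 + t2 *\<^sub>R x0" "y' = y2 + t2*\<alpha>" "(u2,y2)\<in>G" unfolding G'_def by blast
    moreover have "(u1+u2, y1+y2) \<in> G" using hadd calculation by blast
    moreover have "(x+x', y+y') = ((u1+u2) + (t1+t2) *\<^sub>R x0, (y1+y2) + (t1+t2)*\<alpha>)"
      using calculation by (simp add: algebra_simps)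
    ultimately show "(x+x', y+y')\<in>G'" using G'I by metis
  next
    fix x y a assume "(x,y)\<in>G'"
    then obtain u1 y1 t1 where "x = u1 + t1 *\<^sub>R x0" "y = y1 + t1*\<alpha>" "(u1,y1)\<in>G"
      unfolding G'_def by blast
    moreover have "(a *\<^sub>R u1, a*y1) \<in> G" using scl calculation by blast
    moreover have "(a *\<^sub>R x, a*y) = (a *\<^sub>R u1 + (a*t1) *\<^sub>R x0, a*y1 + (a*t1)*\<alpha>)"
      using calculation by (simp add: algebra_simps)
    ultimately show "(a *\<^sub>R x, a*y)\<in>G'" using G'I by metis
  next
    fix x y assume "(x,y)\<in>G'"
    then obtain u y1 t where xe: "x = u + t *\<^sub>R x0" and ye: "y = y1 + t*\<alpha>" and uy: "(u,y1)\<in>G"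
      unfolding G'_def by blast
    show "y \<le> c * norm x"
    proof (cases "t = 0")
      case True thus ?thesis using xe ye bd uy by simp
    next
      case False
      show ?thesis
      proof (cases "t > 0")
        case True
        have "((1/t) *\<^sub>R u, (1/t) * y1) \<in> G" using scl[OF uy] .
        from a2[OF this] have "\<alpha> \<le> c * norm ((1/t) *\<^sub>R u + x0) - (1/t) * y1" .
        also have "(1/t) *\<^sub>R u + x0 = (1/t) *\<^sub>R (u + t *\<^sub>R x0)" using True by (simp add: algebra_simps)
        finally have "\<alpha> \<le> c * ((1/t) * norm (u + t *\<^sub>R x0)) - (1/t) * y1" using True by simp
        hence "t * \<alpha> \<le> t * (c * ((1/t) * norm (u + t *\<^sub>R x0)) - (1/t) * y1)"
          using True by (simp add: mult_left_mono)
        also have "\<dots> = c * norm (u + t *\<^sub>R x0) - y1" using True by (simp add: field_simps)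
        finally show ?thesis using xe ye by simp
      next
        case False
        hence tn: "t < 0" using \<open>t \<noteq> 0\<close> by simp
        define s where "s = - t"
        have sp: "s > 0" using tn s_def by simp
        have "((1/s) *\<^sub>R u, (1/s) * y1) \<in> G" using scl[OF uy] .
        from a1[OF this] have "(1/s) * y1 - c * norm ((1/s) *\<^sub>R u - x0) \<le> \<alpha>" .
        also have "(1/s) *\<^sub>R u - x0 = (1/s) *\<^sub>R (u + t *\<^sub>R x0)" using sp s_def by (simp add: algebra_simps)
        finally have "(1/s) * y1 - c * ((1/s) * norm (u + t *\<^sub>R x0)) \<le> \<alpha>" using sp by simp
        hence "s * ((1/s) * y1 - c * ((1/s) * norm (u + t *\<^sub>R x0))) \<le> s * \<alpha>"
          using sp by (simp add: mult_left_mono)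
        moreover have "s * ((1/s) * y1 - c * ((1/s) * norm (u + t *\<^sub>R x0))) = y1 - c * norm (u + t *\<^sub>R x0)"
          using sp by (simp add: algebra_simps)
        ultimately have "y1 - c * norm (u + t *\<^sub>R x0) \<le> s * \<alpha>" by simp
        thus ?thesis using xe ye s_def by simp
      qed
    qed
  qed
  thus ?thesis using sub neq by blast
qed

lemma hahn_banach_normed:
  fixes f :: "'b::real_normed_vector \<Rightarrow> real"
  assumes V: "subspace V" and fadd: "\<And>x y. x\<in>V \<Longrightarrow> y\<in>V \<Longrightarrow> f (x+y) = f x + f y"
    and fscl: "\<And>x a. x\<in>V \<Longrightarrow> f (a *\<^sub>R x) = a * f x"
    and fbd: "\<And>x. x\<in>V \<Longrightarrow> \<bar>f x\<bar> \<le> c * norm x" and c: "c \<ge> 0"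
  shows "\<exists>g. bounded_linear g \<and> (\<forall>x\<in>V. g x = f x) \<and> (\<forall>x. \<bar>g x\<bar> \<le> c * norm x)"
proof -
  define G0 where "G0 = {(v, f v) | v. v \<in> V}"
  have V0: "0 \<in> V" using V subspace_0 by blast
  have G0A: "G0 \<in> hbA V f c" unfolding hbA_def
  proof (intro CollectI conjI allI impI ballI)
    fix v assume "v \<in> V" thus "(v, f v) \<in> G0" unfolding G0_def by blast
  next
    fix x y z assume "(x,y)\<in>G0" "(x,z)\<in>G0" thus "y = z" unfolding G0_def by blast
  next
    fix x y x' y' assume "(x,y)\<in>G0" "(x',y')\<in>G0"
    thus "(x+x', y+y')\<in>G0" unfolding G0_def using fadd subspace_add[OF V] by auto
  next
    fix x y a assume "(x,y)\<in>G0"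
    thus "(a *\<^sub>R x, a*y)\<in>G0" unfolding G0_def using fscl subspace_scale[OF V] by auto
  next
    fix x y assume "(x,y)\<in>G0"
    thus "y \<le> c * norm x" unfolding G0_def using fbd by (auto simp: abs_le_iff)
  qed
  have "\<forall>C\<in>chains (hbA V f c). \<exists>U\<in>hbA V f c. \<forall>X\<in>C. X \<subseteq> U"
  proof
    fix C assume C: "C \<in> chains (hbA V f c)"
    show "\<exists>U\<in>hbA V f c. \<forall>X\<in>C. X \<subseteq> U"
    proof (cases "C = {}")
      case True thus ?thesis using G0A by blast
    next
      case False
      have CA: "C \<subseteq> hbA V f c" and ch: "\<And>X Y. X\<in>C \<Longrightarrow> Y\<in>C \<Longrightarrow> X \<subseteq> Y \<or> Y \<subseteq> X"
        using C unfolding chains_def chain_subset_def by blast+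
      have "\<Union>C \<in> hbA V f c"
        unfolding hbA_def
      proof (intro CollectI conjI allI impI ballI)
        fix v assume "v\<in>V"
        obtain X where "X \<in> C" using False by blast
        thus "(v, f v) \<in> \<Union>C" using hbA_D(1)[of X V f c v] CA \<open>v\<in>V\<close> by blast
      next
        fix x y z assume "(x,y)\<in>\<Union>C" "(x,z)\<in>\<Union>C"
        then obtain X Y where "X\<in>C" "Y\<in>C" "(x,y)\<in>X" "(x,z)\<in>Y" by blast
        thus "y = z" using ch[of X Y] CA hbA_D(2)[of X V f c] hbA_D(2)[of Y V f c] by blast
      next
        fix x y x' y' assume "(x,y)\<in>\<Union>C" "(x',y')\<in>\<Union>C"
        then obtain X Y where "X\<in>C" "Y\<in>C" "(x,y)\<in>X" "(x',y')\<in>Y" by blast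
        thus "(x+x', y+y')\<in>\<Union>C" using ch[of X Y] CA hbA_D(3)[of X V f c] hbA_D(3)[of Y V f c] by blast
      next
        fix x y a assume "(x,y)\<in>\<Union>C"
        thus "(a *\<^sub>R x, a*y)\<in>\<Union>C" using CA hbA_D(4) by blast
      next
        fix x y assume "(x,y)\<in>\<Union>C"
        thus "y \<le> c * norm x" using CA hbA_D(5) by blast
      qed
      thus ?thesis by blast
    qed
  qed
  from Zorn_Lemma2[OF this] obtain M where MA: "M \<in> hbA V f c"
    and Mmax: "\<forall>X\<in>hbA V f c. M \<subseteq> X \<longrightarrow> X = M" by blast
  have hfun: "\<And>x y z. (x,y)\<in>M \<Longrightarrow> (x,z)\<in>M \<Longrightarrow> y = z"
   and hadd: "\<And>x y x' y'. (x,y)\<in>M \<Longrightarrow> (x',y')\<in>M \<Longrightarrow> (x+x', y+y')\<in>M"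
   and scl: "\<And>x y a. (x,y)\<in>M \<Longrightarrow> (a *\<^sub>R x, a*y)\<in>M"
   and bd: "\<And>x y. (x,y)\<in>M \<Longrightarrow> y \<le> c * norm x"
   and inV: "\<And>v. v\<in>V \<Longrightarrow> (v, f v) \<in> M"
    using MA unfolding hbA_def by blast+
  have tot: "\<exists>y. (x,y) \<in> M" for x
  proof (rule ccontr)
    assume "\<nexists>y. (x, y) \<in> M"
    from hb_extend[OF MA c V0, of x] this Mmax show False by blast
  qed
  define g where "g x = (THE y. (x,y) \<in> M)" for x
  have gM: "(x, g x) \<in> M" for x
    unfolding g_def using tot[of x] hfun by (auto intro: theI2)
  have geq: "(x, y) \<in> M \<Longrightarrow> g x = y" for x y using gM hfun by blast
  have gadd: "g (x + y) = g x + g y" for x y using geq[OF hadd[OF gM gM]] .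
  have gscl: "g (a *\<^sub>R x) = a * g x" for a x using geq[OF scl[OF gM]] .
  have gbd: "\<bar>g x\<bar> \<le> c * norm x" for x
  proof -
    have "g x \<le> c * norm x" using bd[OF gM] .
    moreover have "- g x \<le> c * norm x" using bd[OF scl[OF gM[of x], of "-1"]] by simp
    ultimately show ?thesis by linarith
  qed
  have "bounded_linear g"
  proof (rule bounded_linear_intro[where K=c])
    show "g (x + y) = g x + g y" for x y by (rule gadd)
    show "g (r *\<^sub>R x) = r *\<^sub>R g x" for r x using gscl by simp
    show "norm (g x) \<le> norm x * c" for x using gbd[of x] by (simp add: mult.commute)
  qed
  moreover have "\<forall>x\<in>V. g x = f x" using geq inV by blast
  ultimately show ?thesis using gbd by blast
qed


lemma open_mapping_approx:
  fixes T :: "'a::banach \<Rightarrow> 'b::banach"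
  assumes T: "bounded_linear T" and s: "surj T"
  shows "\<exists>R\<ge>0. \<forall>y \<epsilon>. \<epsilon> > 0 \<longrightarrow> (\<exists>x. norm x \<le> R * norm y \<and> norm (y - T x) < \<epsilon>)"
proof -
  interpret T: bounded_linear T by fact
  define \<G> where "\<G> = range (\<lambda>n::nat. closure (T ` cball 0 (real n)))"
  have "\<exists>F\<in>\<G>. interior F \<noteq> {}"
  proof (rule ccontr)
    assume "\<not> ?thesis"
    hence "euclidean interior_of \<Union>\<G> = {}"
      by (intro Baire_category_alt) (auto simp: \<G>_def completely_metrizable_space_euclidean closed_closedin[symmetric])
    moreover have "\<Union>\<G> = UNIV"
    proof -
      have "y \<in> \<Union>\<G>" for y
      proof -
        obtain x where "y = T x" using s by (metis surjD)
        moreover obtain n::nat where "norm x \<le> real n" using real_arch_simple by blast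
        ultimately have "y \<in> closure (T ` cball 0 (real n))" using closure_subset by fastforce
        thus ?thesis unfolding \<G>_def by blast
      qed
      thus ?thesis by blast
    qed
    ultimately show False by simp
  qed
  then obtain n::nat where "interior (closure (T ` cball 0 (real n))) \<noteq> {}" unfolding \<G>_def by blast
  then obtain y0 where "y0 \<in> interior (closure (T ` cball 0 (real n)))" by blast
  then obtain r where r: "r > 0" and rb: "ball y0 r \<subseteq> closure (T ` cball 0 (real n))"
    using mem_interior by blast
  have approx0: "\<exists>x. norm x \<le> 2 * real n \<and> norm (y - T x) < \<epsilon>" if ny: "norm y < r" and ep: "\<epsilon> > 0" for y \<epsilon>
  proof -
    have "y0 + y \<in> closure (T ` cball 0 (real n))" using rb ny by (auto simp: dist_norm)
    then obtain a where a: "a \<in> cball 0 (real n)" "dist (T a) (y0 + y) < \<epsilon>/2"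
      using ep unfolding closure_approachable by (metis half_gt_zero imageE)
    have "y0 \<in> closure (T ` cball 0 (real n))" using rb r by auto
    then obtain b where b: "b \<in> cball 0 (real n)" "dist (T b) y0 < \<epsilon>/2"
      using ep unfolding closure_approachable by (metis half_gt_zero imageE)
    have "norm (a - b) \<le> norm a + norm b" by (rule norm_triangle_ineq4)
    also have "\<dots> \<le> 2 * real n" using a(1) b(1) by auto
    finally have 1: "norm (a - b) \<le> 2 * real n" .
    have "y - T (a - b) = (y0 + y - T a) + (T b - y0)" by (simp add: T.diff algebra_simps)
    hence "norm (y - T (a - b)) \<le> norm (y0 + y - T a) + norm (T b - y0)"
      by (metis norm_triangle_ineq)
    also have "\<dots> < \<epsilon>" using a(2) b(2) by (simp add: dist_norm norm_minus_commute)
    finally show ?thesis using 1 by blast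
  qed
  define R where "R = 4 * real n / r"
  have R0: "R \<ge> 0" using r unfolding R_def by simp
  have "\<exists>x. norm x \<le> R * norm y \<and> norm (y - T x) < \<epsilon>" if epos: "\<epsilon> > 0" for y \<epsilon>
  proof (cases "y = 0")
    case True thus ?thesis using epos by (intro exI[of _ 0]) simp
  next
    case False
    hence ny: "norm y > 0" by simp
    define k where "k = 2 * norm y / r"
    have k: "k > 0" using ny r by (simp add: k_def)
    define y' where "y' = (1/k) *\<^sub>R y"
    have "norm y' = r / 2" using ny r by (simp add: y'_def k_def)
    hence "norm y' < r" using r by simp
    from approx0[OF this, of "\<epsilon> / k"] obtain x' where x': "norm x' \<le> 2 * real n" "norm (y' - T x') < \<epsilon> / k"
      using k epos by auto
    have "norm (k *\<^sub>R x') \<le> k * (2 * real n)" using x'(1) k by (simp add: mult_left_mono)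
    also have "\<dots> = R * norm y" unfolding k_def R_def using r by (simp add: field_simps)
    finally have 1: "norm (k *\<^sub>R x') \<le> R * norm y" .
    have "y - T (k *\<^sub>R x') = k *\<^sub>R (y' - T x')" using k by (simp add: y'_def T.scaleR algebra_simps)
    hence "norm (y - T (k *\<^sub>R x')) = k * norm (y' - T x')" using k by simp
    also have "\<dots> < k * (\<epsilon> / k)" by (rule mult_strict_left_mono[OF x'(2) k])
    also have "\<dots> = \<epsilon>" using k by simp
    finally show ?thesis using 1 by blast
  qed
  thus ?thesis using R0 by blast
qed

lemma open_mapping_lift:
  fixes T :: "'a::banach \<Rightarrow> 'b::banach"
  assumes T: "bounded_linear T" and s: "surj T"
  shows "\<exists>C>0. \<forall>y. \<exists>x. T x = y \<and> norm x \<le> C * norm y"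
proof -
  interpret T: bounded_linear T by fact
  obtain R where R0: "R \<ge> 0" and R: "\<And>y \<epsilon>. \<epsilon> > 0 \<Longrightarrow> \<exists>x. norm x \<le> R * norm y \<and> norm (y - T x) < \<epsilon>"
    using open_mapping_approx[OF T s] by blast
  have ex: "\<exists>x. norm x \<le> R * norm z \<and> norm (z - T x) \<le> norm z / 2" for z
  proof (cases "z = 0")
    case True thus ?thesis by (intro exI[of _ 0]) simp
  next
    case False thus ?thesis using R[of "norm z / 2" z] by (auto intro: less_imp_le)
  qed
  define lift where "lift z = (SOME x. norm x \<le> R * norm z \<and> norm (z - T x) \<le> norm z / 2)" for z
  have lift: "norm (lift z) \<le> R * norm z" "norm (z - T (lift z)) \<le> norm z / 2" for z
    using someI_ex[OF ex[of z]] unfolding lift_def by blast+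
  have "\<exists>x. T x = y \<and> norm x \<le> (2 * R) * norm y" for y
  proof -
    define res where "res = rec_nat y (\<lambda>k z. z - T (lift z))"
    have res0: "res 0 = y" and resS: "res (Suc k) = res k - T (lift (res k))" for k
      unfolding res_def by simp_all
    have resb: "norm (res k) \<le> norm y * (1/2)^k" for k
    proof (induction k)
      case 0 thus ?case by (simp add: res0)
    next
      case (Suc k)
      have "norm (res (Suc k)) \<le> norm (res k) / 2" using lift(2)[of "res k"] by (simp add: resS)
      also have "\<dots> \<le> norm y * (1/2)^k / 2" using Suc by simp
      finally show ?case by simp
    qed
    define xs where "xs k = lift (res k)" for k
    have xb: "norm (xs k) \<le> R * norm y * (1/2)^k" for k
    proof -
      have "norm (xs k) \<le> R * norm (res k)" unfolding xs_def by (rule lift(1))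
      also have "\<dots> \<le> R * (norm y * (1/2)^k)" using resb[of k] R0 by (simp add: mult_left_mono)
      finally show ?thesis by simp
    qed
    have gs: "summable (\<lambda>k. R * norm y * (1/2::real)^k)"
      by (intro summable_mult summable_geometric) simp
    have sx: "summable xs" using xb by (intro summable_comparison_test[OF _ gs]) auto
    have sxn: "summable (\<lambda>k. norm (xs k))" using xb by (intro summable_comparison_test[OF _ gs]) auto
    have "norm (suminf xs) \<le> (\<Sum>k. norm (xs k))" by (rule summable_norm[OF sxn])
    also have "\<dots> \<le> (\<Sum>k. R * norm y * (1/2::real)^k)" by (rule suminf_le[OF xb sxn gs])
    also have "\<dots> = R * norm y * 2" using suminf_mult[of "\<lambda>k. (1/2::real)^k" "R * norm y"]
      by (simp add: suminf_geometric)
    finally have nb: "norm (suminf xs) \<le> (2 * R) * norm y" by simp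
    have psum: "(\<Sum>k<n. T (xs k)) = y - res n" for n
      by (induction n) (simp_all add: res0 resS xs_def)
    have "res \<longlonglongrightarrow> 0"
    proof (rule tendsto_norm_zero_cancel, rule Lim_null_comparison[where g="\<lambda>k. norm y * (1/2)^k"])
      show "\<forall>\<^sub>F k in sequentially. norm (norm (res k)) \<le> norm y * (1/2)^k" using resb by simp
      show "(\<lambda>k. norm y * (1/2::real)^k) \<longlonglongrightarrow> 0"
        by (intro tendsto_mult_right_zero LIMSEQ_power_zero) simp
    qed
    hence "(\<lambda>n. y - res n) \<longlonglongrightarrow> y - 0" by (intro tendsto_diff) auto
    hence "(\<lambda>k. T (xs k)) sums y" unfolding sums_def psum by simp
    moreover have "(\<lambda>k. T (xs k)) sums T (suminf xs)" using T.sums[OF summable_sums[OF sx]] .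
    ultimately have "T (suminf xs) = y" using sums_unique2 by blast
    thus ?thesis using nb by blast
  qed
  moreover have "(2 * R) * norm y \<le> (2 * R + 1) * norm y" for y :: 'b by (simp add: mult_right_mono)
  ultimately have "\<forall>y. \<exists>x. T x = y \<and> norm x \<le> (2 * R + 1) * norm y" by (meson order_trans)
  thus ?thesis using R0 by (intro exI[of _ "2 * R + 1"]) auto
qed


definition seqcpt :: "'a::real_normed_vector set \<Rightarrow> bool" where
  "seqcpt S \<longleftrightarrow> (\<forall>x::nat\<Rightarrow>'a. (\<forall>n. x n \<in> S) \<and> bounded (range x) \<longrightarrow>
      (\<exists>r y. strict_mono r \<and> y \<in> S \<and> (x \<circ> r) \<longlonglongrightarrow> y))"

lemma seqcpt_closed:
  assumes "seqcpt S" shows "closed S"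
  unfolding closed_sequential_limits
proof (intro allI impI)
  fix x l assume a: "(\<forall>n. x n \<in> S) \<and> x \<longlonglongrightarrow> l"
  hence "bounded (range x)" using convergent_imp_bounded by blast
  then obtain r y where r: "strict_mono r" "y \<in> S" "(x \<circ> r) \<longlonglongrightarrow> y"
    using assms a unfolding seqcpt_def by blast
  have "(x \<circ> r) \<longlonglongrightarrow> l" using LIMSEQ_subseq_LIMSEQ a r(1) by blast
  hence "y = l" using r(3) LIMSEQ_unique by blast
  thus "l \<in> S" using r(2) by simp
qed

lemma seqcpt_span:
  fixes B :: "'a::real_normed_vector set"
  assumes "finite B" shows "seqcpt (span B)"
  using assms
proof (induction B rule: finite_induct)
  case empty
  show ?case unfolding seqcpt_def
  proof (intro allI impI)
    fix x :: "nat \<Rightarrow> 'a" assume "(\<forall>n. x n \<in> span {}) \<and> bounded (range x)"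
    hence "x = (\<lambda>n. 0)" by auto
    thus "\<exists>r y. strict_mono r \<and> y \<in> span {} \<and> (x \<circ> r) \<longlonglongrightarrow> y"
      by (intro exI[of _ id] exI[of _ 0]) (auto simp: strict_mono_def o_def)
  qed
next
  case (insert b B)
  show ?case
  proof (cases "b \<in> span B")
    case True hence "span (insert b B) = span B" by (rule span_redundant)
    thus ?thesis using insert.IH by simp
  next
    case False
    have cl: "closed (span B)" using seqcpt_closed[OF insert.IH] .
    then obtain e where e: "e > 0" "ball b e \<subseteq> - span B"
      using False open_contains_ball[of "- span B"] closed_def by blast
    have far: "e \<le> dist b s" if "s \<in> span B" for s
      using e(2) that by (metis ComplD linorder_not_le mem_ball subsetD)
    show ?thesis unfolding seqcpt_def
    proof (intro allI impI)
      fix x :: "nat \<Rightarrow> 'a" assume a: "(\<forall>n. x n \<in> span (insert b B)) \<and> bounded (range x)"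
      have "bounded (range x)" using a by simp
      then obtain Bd where Bd0: "Bd > 0" "\<forall>z\<in>range x. norm z \<le> Bd" unfolding bounded_pos by blast
      hence Bd: "Bd > 0" "\<And>n. norm (x n) \<le> Bd" by auto
      have "\<forall>n. \<exists>t. x n - t *\<^sub>R b \<in> span B"
      proof
        fix n
        have "x n \<in> span (insert b B)" using a by simp
        thus "\<exists>t. x n - t *\<^sub>R b \<in> span B" by (simp only: span_breakdown_eq)
      qed
      from choice[OF this] obtain t where t0: "\<forall>n. x n - t n *\<^sub>R b \<in> span B" by blast
      hence t: "\<And>n. x n - t n *\<^sub>R b \<in> span B" by blast
      have tb: "\<bar>t n\<bar> * e \<le> Bd" for n
      proof (cases "t n = 0")
        case True thus ?thesis using Bd by simp
      next
        case False
        have "(-(1/t n)) *\<^sub>R (x n - t n *\<^sub>R b) \<in> span B" using t span_scale by blast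
        moreover have "(-(1/t n)) *\<^sub>R (x n - t n *\<^sub>R b) = b - (1/t n) *\<^sub>R x n"
          using False by (simp add: algebra_simps)
        ultimately have "e \<le> dist b (b - (1/t n) *\<^sub>R x n)" using far by metis
        also have "dist b (b - (1/t n) *\<^sub>R x n) = norm (x n) / \<bar>t n\<bar>"
          by (simp add: dist_norm)
        finally have "e * \<bar>t n\<bar> \<le> norm (x n)" using False by (simp add: field_simps)
        thus ?thesis using Bd(2)[of n] by (simp add: mult.commute)
      qed
      have "bounded (range t)" unfolding bounded_iff
      proof (intro exI ballI)
        fix z assume "z \<in> range t"
        then obtain n where "z = t n" by blast
        thus "norm z \<le> Bd / e" using tb[of n] e(1) by (simp add: field_simps)
      qed
      then obtain l r1 where r1: "strict_mono r1" "(t \<circ> r1) \<longlonglongrightarrow> l"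
        using bounded_imp_convergent_subsequence by blast
      define y where "y n = x n - t n *\<^sub>R b" for n
      have yB: "y n \<in> span B" for n using t y_def by simp
      have "norm (y n) \<le> Bd + Bd / e * norm b" for n
      proof -
        have "norm (y n) \<le> norm (x n) + norm (t n *\<^sub>R b)" unfolding y_def by (rule norm_triangle_ineq4)
        also have "\<dots> \<le> Bd + Bd / e * norm b"
        proof (rule add_mono)
          show "norm (x n) \<le> Bd" by (rule Bd(2))
          have "\<bar>t n\<bar> \<le> Bd / e" using tb[of n] e(1) by (simp add: field_simps)
          from mult_right_mono[OF this norm_ge_zero[of b]]
          show "norm (t n *\<^sub>R b) \<le> Bd / e * norm b" by simp
        qed
        finally show ?thesis .
      qed
      hence "bounded (range (y \<circ> r1))" unfolding bounded_iff by auto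
      moreover have "\<forall>n. (y \<circ> r1) n \<in> span B" using yB by simp
      ultimately obtain r2 z where r2: "strict_mono r2" "z \<in> span B" "((y \<circ> r1) \<circ> r2) \<longlonglongrightarrow> z"
        using insert.IH unfolding seqcpt_def by blast
      have tl: "((t \<circ> r1) \<circ> r2) \<longlonglongrightarrow> l" using LIMSEQ_subseq_LIMSEQ r1(2) r2(1) by blast
      have "(\<lambda>n. ((y \<circ> r1) \<circ> r2) n + ((t \<circ> r1) \<circ> r2) n *\<^sub>R b) \<longlonglongrightarrow> z + l *\<^sub>R b"
        by (intro tendsto_intros r2(3) tl)
      moreover have "(\<lambda>n. ((y \<circ> r1) \<circ> r2) n + ((t \<circ> r1) \<circ> r2) n *\<^sub>R b) = x \<circ> (r1 \<circ> r2)"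
        by (rule ext) (simp add: y_def)
      ultimately have lim: "(x \<circ> (r1 \<circ> r2)) \<longlonglongrightarrow> z + l *\<^sub>R b" by simp
      have "(z + l *\<^sub>R b) - l *\<^sub>R b \<in> span B" using r2(2) by simp
      hence mem: "z + l *\<^sub>R b \<in> span (insert b B)" using span_breakdown_eq by blast
      have sm: "strict_mono (r1 \<circ> r2)" using r1(1) r2(1) strict_mono_o by blast
      show "\<exists>r y. strict_mono r \<and> y \<in> span (insert b B) \<and> (x \<circ> r) \<longlonglongrightarrow> y"
        using lim mem sm by blast
    qed
  qed
qed


locale fddc =
  fixes E :: "nat \<Rightarrow> 'a::banach set"
  assumes fdd: "is_fdd E"
begin

lemma Esub: "subspace (E n)"
  using fdd unfolding is_fdd_def fin_dim_subspace_def by blast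

lemma E0: "0 \<in> E n" using Esub subspace_0 by blast

lemma Eadd: "x \<in> E n \<Longrightarrow> y \<in> E n \<Longrightarrow> x + y \<in> E n" using Esub subspace_add by blast

lemma Escl: "x \<in> E n \<Longrightarrow> c *\<^sub>R x \<in> E n" using Esub subspace_scale by blast

lemma Efin: "\<exists>B. finite B \<and> E n = span B"
  using fdd unfolding is_fdd_def fin_dim_subspace_def by blast

lemma exu: "\<exists>!u. (\<forall>n. u n \<in> E n) \<and> u sums x"
  using fdd unfolding is_fdd_def by blast

lemma proj_exp: "(\<forall>n. fdd_proj E n x \<in> E n) \<and> (\<lambda>n. fdd_proj E n x) sums x"
proof -
  have "(\<forall>n. (THE u. (\<forall>k. u k \<in> E k) \<and> u sums x) n \<in> E n) \<and> (THE u. (\<forall>k. u k \<in> E k) \<and> u sums x) sums x"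
    using theI'[OF exu[of x]] by blast
  thus ?thesis unfolding fdd_proj_def by auto
qed

lemma projE: "fdd_proj E n x \<in> E n" using proj_exp by blast
lemma proj_sums: "(\<lambda>n. fdd_proj E n x) sums x" using proj_exp by blast

lemma proj_uniq:
  assumes "\<And>n. u n \<in> E n" "u sums x"
  shows "fdd_proj E n x = u n"
proof -
  have "(THE u. (\<forall>k. u k \<in> E k) \<and> u sums x) = u"
    using assms exu[of x] by (intro the1_equality) auto
  thus ?thesis unfolding fdd_proj_def by simp
qed

lemma proj_add: "fdd_proj E n (x + y) = fdd_proj E n x + fdd_proj E n y"
  by (rule proj_uniq[of "\<lambda>n. fdd_proj E n x + fdd_proj E n y"])
     (auto intro: Eadd projE sums_add proj_sums)

lemma proj_scl: "fdd_proj E n (c *\<^sub>R x) = c *\<^sub>R fdd_proj E n x"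
  by (rule proj_uniq[of "\<lambda>n. c *\<^sub>R fdd_proj E n x"])
     (auto intro: Escl projE sums_scaleR_right proj_sums)

lemma proj_linear: "linear (fdd_proj E n)"
  by (rule linearI) (simp_all add: proj_add proj_scl)

lemma proj_finsum:
  assumes "\<And>i. i < N \<Longrightarrow> x i \<in> E i"
  shows "fdd_proj E j (\<Sum>i<N. x i) = (if j < N then x j else 0)"
proof -
  have "(\<lambda>i. if i \<in> {..<N} then x i else 0) sums (\<Sum>i\<in>{..<N}. x i)"
    by (rule sums_If_finite_set) simp
  hence "fdd_proj E j (\<Sum>i<N. x i) = (\<lambda>i. if i \<in> {..<N} then x i else 0) j"
    by (intro proj_uniq) (auto simp: assms E0)
  thus ?thesis by simp
qed

lemma proj_of_E: "x \<in> E i \<Longrightarrow> fdd_proj E j x = (if j = i then x else 0)"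
  using proj_finsum[of "Suc i" "\<lambda>k. if k = i then x else 0" j] E0
  by (auto split: if_splits)

definition SN :: "nat \<Rightarrow> 'a \<Rightarrow> 'a" where "SN N x = (\<Sum>j<N. fdd_proj E j x)"

lemma SN_tendsto: "(\<lambda>N. SN N x) \<longlonglongrightarrow> x"
  using proj_sums[of x] unfolding sums_def SN_def .

lemma proj_SN: "fdd_proj E n (SN N x) = (if n < N then fdd_proj E n x else 0)"
  unfolding SN_def by (rule proj_finsum) (rule projE)

lemma SN_linear: "linear (SN N)"
  unfolding SN_def by (intro linearI) (simp_all add: proj_add proj_scl sum.distrib scaleR_sum_right)

end

locale ufddc = fddc E for E :: "nat \<Rightarrow> 'a::banach set" +
  fixes K :: real
  assumes unc: "unconditional_fdd K E"
begin

lemma unc_signs: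
  assumes "\<And>i. x i \<in> E i" "\<And>i. s i = 1 \<or> s i = -1"
  shows "norm (\<Sum>i<n. s i *\<^sub>R x i) \<le> K * norm (\<Sum>i<n. x i)"
  using unc assms unfolding unconditional_fdd_def by blast

lemma SN_bound2: "norm (2 *\<^sub>R SN N x - x) \<le> K * norm x"
proof -
  define s where "s i = (if i < N then 1 else -1::real)" for i
  have eq: "(\<Sum>i<n. s i *\<^sub>R fdd_proj E i x) = 2 *\<^sub>R SN N x - SN n x" if "N \<le> n" for n
  proof -
    have "(\<Sum>i<n. s i *\<^sub>R fdd_proj E i x) = (\<Sum>i<N. s i *\<^sub>R fdd_proj E i x) + (\<Sum>i\<in>{N..<n}. s i *\<^sub>R fdd_proj E i x)"
      using sum.atLeastLessThan_concat[of 0 N n "\<lambda>i. s i *\<^sub>R fdd_proj E i x"] that by (simp add: atLeast0LessThan)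
    also have "(\<Sum>i<N. s i *\<^sub>R fdd_proj E i x) = SN N x" unfolding SN_def s_def by simp
    also have "(\<Sum>i\<in>{N..<n}. s i *\<^sub>R fdd_proj E i x) = - (\<Sum>i\<in>{N..<n}. fdd_proj E i x)"
      unfolding s_def by (simp add: sum_negf)
    also have "(\<Sum>i\<in>{N..<n}. fdd_proj E i x) = SN n x - SN N x"
      unfolding SN_def using sum.atLeastLessThan_concat[of 0 N n "\<lambda>i. fdd_proj E i x"] that
      by (simp add: atLeast0LessThan eq_diff_eq add.commute)
    finally show ?thesis by (simp add: scaleR_2 algebra_simps)
  qed
  have "norm (2 *\<^sub>R SN N x - SN n x) \<le> K * norm (SN n x)" if "N \<le> n" for n
  proof -
    have "norm (\<Sum>i<n. s i *\<^sub>R fdd_proj E i x) \<le> K * norm (\<Sum>i<n. fdd_proj E i x)"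
      by (rule unc_signs) (auto simp: s_def projE)
    thus ?thesis using eq[OF that] unfolding SN_def by simp
  qed
  hence ev: "\<exists>N0. \<forall>n\<ge>N0. 0 \<le> K * norm (SN n x) - norm (2 *\<^sub>R SN N x - SN n x)" by auto
  have "(\<lambda>n. K * norm (SN n x) - norm (2 *\<^sub>R SN N x - SN n x)) \<longlonglongrightarrow> K * norm x - norm (2 *\<^sub>R SN N x - x)"
    by (intro tendsto_intros SN_tendsto)
  from LIMSEQ_le_const[OF this ev] show ?thesis by simp
qed

definition K1 where "K1 = (K + 1) / 2"

lemma SN_bound: "norm (SN N x) \<le> K1 * norm x"
proof -
  have "norm (2 *\<^sub>R SN N x) \<le> norm (2 *\<^sub>R SN N x - x) + norm x"
    using norm_triangle_sub[of "2 *\<^sub>R SN N x" x] by linarith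
  also have "\<dots> \<le> K * norm x + norm x" using SN_bound2 by simp
  finally show ?thesis unfolding K1_def by (simp add: field_simps)
qed

lemma proj_bound: "norm (fdd_proj E n x) \<le> 2 * K1 * norm x"
proof -
  have "fdd_proj E n x = SN (Suc n) x - SN n x" unfolding SN_def by simp
  hence "norm (fdd_proj E n x) \<le> norm (SN (Suc n) x) + norm (SN n x)" by (simp add: norm_triangle_ineq4)
  also have "\<dots> \<le> K1 * norm x + K1 * norm x" using SN_bound by (intro add_mono)
  also have "\<dots> = 2 * K1 * norm x" by simp
  finally show ?thesis .
qed

lemma convex_unc:
  assumes xE: "\<And>i. x i \<in> E i" and c: "\<And>i. \<bar>c i\<bar> \<le> 1"
  shows "norm (\<Sum>i<n. c i *\<^sub>R x i) \<le> K * norm (\<Sum>i<n. x i)"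
proof -
  have "\<forall>c. (\<forall>i. \<bar>c i\<bar> \<le> 1) \<and> (\<forall>i\<ge>k. c i = 1 \<or> c i = -1) \<longrightarrow> norm (\<Sum>i<n. c i *\<^sub>R x i) \<le> K * norm (\<Sum>i<n. x i)" for k
  proof (induction k)
    case 0
    show ?case using unc_signs[OF xE] by auto
  next
    case (Suc k)
    show ?case
    proof (intro allI impI)
      fix c :: "nat \<Rightarrow> real" assume h: "(\<forall>i. \<bar>c i\<bar> \<le> 1) \<and> (\<forall>i\<ge>Suc k. c i = 1 \<or> c i = -1)"
      define cp where "cp = c(k := 1)"
      define cm where "cm = c(k := -1)"
      define l where "l = (1 + c k) / 2"
      have ck: "\<bar>c k\<bar> \<le> 1" using h by blast
      have l01: "0 \<le> l" "l \<le> 1" using ck unfolding l_def by (auto simp: abs_le_iff)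
      have "(\<forall>i. \<bar>cp i\<bar> \<le> 1) \<and> (\<forall>i\<ge>k. cp i = 1 \<or> cp i = -1)"
      proof (intro conjI allI impI)
        fix i show "\<bar>cp i\<bar> \<le> 1" using h by (simp add: cp_def)
      next
        fix i assume "k \<le> i" thus "cp i = 1 \<or> cp i = -1"
          using h by (cases "i = k") (auto simp: cp_def)
      qed
      hence cpb: "norm (\<Sum>i<n. cp i *\<^sub>R x i) \<le> K * norm (\<Sum>i<n. x i)" using Suc.IH by blast
      have "(\<forall>i. \<bar>cm i\<bar> \<le> 1) \<and> (\<forall>i\<ge>k. cm i = 1 \<or> cm i = -1)"
      proof (intro conjI allI impI)
        fix i show "\<bar>cm i\<bar> \<le> 1" using h by (simp add: cm_def)
      next
        fix i assume "k \<le> i" thus "cm i = 1 \<or> cm i = -1"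
          using h by (cases "i = k") (auto simp: cm_def)
      qed
      hence cmb: "norm (\<Sum>i<n. cm i *\<^sub>R x i) \<le> K * norm (\<Sum>i<n. x i)" using Suc.IH by blast
      have ci: "c i = l * cp i + (1 - l) * cm i" for i
        unfolding cp_def cm_def l_def by (auto simp: field_simps)
      have "(\<Sum>i<n. c i *\<^sub>R x i) = l *\<^sub>R (\<Sum>i<n. cp i *\<^sub>R x i) + (1 - l) *\<^sub>R (\<Sum>i<n. cm i *\<^sub>R x i)"
        by (simp add: ci scaleR_add_left sum.distrib scaleR_sum_right)
      hence "norm (\<Sum>i<n. c i *\<^sub>R x i) \<le> l * norm (\<Sum>i<n. cp i *\<^sub>R x i) + (1 - l) * norm (\<Sum>i<n. cm i *\<^sub>R x i)"
        using l01 by (metis (no_types, lifting) abs_of_nonneg diff_ge_0_iff_ge norm_scaleR norm_triangle_ineq)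
      also have "\<dots> \<le> l * (K * norm (\<Sum>i<n. x i)) + (1 - l) * (K * norm (\<Sum>i<n. x i))"
        using l01 cpb cmb by (intro add_mono mult_left_mono) auto
      also have "\<dots> = K * norm (\<Sum>i<n. x i)" by (simp add: algebra_simps)
      finally show "norm (\<Sum>i<n. c i *\<^sub>R x i) \<le> K * norm (\<Sum>i<n. x i)" .
    qed
  qed
  note Q = this[of n, rule_format]
  define c' where "c' i = (if i < n then c i else 1)" for i
  have "norm (\<Sum>i<n. c' i *\<^sub>R x i) \<le> K * norm (\<Sum>i<n. x i)"
    using c by (intro Q) (auto simp: c'_def)
  moreover have "(\<Sum>i<n. c' i *\<^sub>R x i) = (\<Sum>i<n. c i *\<^sub>R x i)" by (simp add: c'_def)
  ultimately show ?thesis by simp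
qed

end

context fddc
begin

lemma shrink_tail:
  assumes sh: "is_fdd (fdd_dual E)" and g: "bounded_linear g"
  shows "\<exists>\<epsilon>. \<epsilon> \<longlonglongrightarrow> 0 \<and> (\<forall>N x. \<bar>g x - g (SN N x)\<bar> \<le> \<epsilon> N * norm x)"
proof -
  define G where "G = Blinfun g"
  have Gapp: "blinfun_apply G = g" unfolding G_def using bounded_linear_Blinfun_apply[OF g] .
  obtain h where h: "\<And>n. h n \<in> fdd_dual E n" "h sums G"
    using sh unfolding is_fdd_def by blast
  define \<epsilon> where "\<epsilon> N = norm (G - (\<Sum>n<N. h n))" for N
  have "(\<lambda>N. \<Sum>n<N. h n) \<longlonglongrightarrow> G" using h(2) unfolding sums_def .
  hence "(\<lambda>N. G - (\<Sum>n<N. h n)) \<longlonglongrightarrow> G - G" by (intro tendsto_diff) auto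
  hence "(\<lambda>N. norm (G - (\<Sum>n<N. h n))) \<longlonglongrightarrow> 0" using tendsto_norm by fastforce
  hence e0: "\<epsilon> \<longlonglongrightarrow> 0" unfolding \<epsilon>_def .
  have hP: "blinfun_apply (h n) y = blinfun_apply (h n) (fdd_proj E n y)" for n y
    using h(1)[of n] unfolding fdd_dual_def by blast
  have "\<bar>g x - g (SN N x)\<bar> \<le> \<epsilon> N * norm x" for N x
  proof -
    have s1: "(\<lambda>n. blinfun_apply (h n) y) sums g y" for y
      using bounded_linear.sums[OF blinfun.bounded_linear_left h(2)] Gapp by simp
    have hSN: "blinfun_apply (h n) (SN N x) = (if n \<in> {..<N} then blinfun_apply (h n) x else 0)" for n
      using hP[of n "SN N x"] hP[of n x] by (simp add: proj_SN)
    have "(\<lambda>n. blinfun_apply (h n) (SN N x)) sums (\<Sum>n\<in>{..<N}. blinfun_apply (h n) x)"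
      unfolding hSN by (rule sums_If_finite_set) simp
    hence gs: "g (SN N x) = (\<Sum>n<N. blinfun_apply (h n) x)" using s1 sums_unique2 by blast
    have "g x - g (SN N x) = blinfun_apply (G - (\<Sum>n<N. h n)) x"
      by (simp add: gs Gapp blinfun.diff_left blinfun.sum_left)
    also have "\<bar>\<dots>\<bar> \<le> \<epsilon> N * norm x" unfolding \<epsilon>_def using norm_blinfun by (metis real_norm_def)
    finally show ?thesis .
  qed
  thus ?thesis using e0 by blast
qed

end

lemma c0_bdd: assumes "a \<in> c0" shows "bdd_above (range (\<lambda>n. \<bar>a n\<bar>))"
proof -
  have "Bseq a" using assms unfolding c0_def by (blast intro: convergent_imp_Bseq convergentI)
  then obtain B where "\<And>n. norm (a n) \<le> B" using BseqE by metis
  thus ?thesis by (auto intro!: bdd_aboveI)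
qed

lemma sup_ge: "a \<in> c0 \<Longrightarrow> \<bar>a k\<bar> \<le> sup_norm a"
  unfolding sup_norm_def by (rule cSUP_upper[OF _ c0_bdd]) auto

lemma sup_le: "(\<And>k. \<bar>a k\<bar> \<le> c) \<Longrightarrow> sup_norm a \<le> c"
  unfolding sup_norm_def by (rule cSUP_least) auto

lemma sup_nonneg: "a \<in> c0 \<Longrightarrow> 0 \<le> sup_norm a"
  using sup_ge[of a 0] by linarith

lemma seqcpt_UNIV_real: "seqcpt (UNIV :: real set)"
  unfolding seqcpt_def using bounded_imp_convergent_subsequence by blast

lemma diag_seqcpt:
  fixes f :: "nat \<Rightarrow> nat \<Rightarrow> 'x::real_normed_vector" and S :: "nat \<Rightarrow> 'x set"
  assumes S: "\<And>q. seqcpt (S q)" and fS: "\<And>q i. f q i \<in> S q" and bd: "\<And>q. bounded (range (f q))"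
  shows "\<exists>r. strict_mono r \<and> (\<forall>q. \<exists>l\<in>S q. (\<lambda>i. f q (r i)) \<longlonglongrightarrow> l)"
proof -
  interpret subseqs "\<lambda>q s. \<exists>l\<in>S q. (\<lambda>i. f q (s i)) \<longlonglongrightarrow> l"
  proof
    fix q and s :: "nat \<Rightarrow> nat" assume s: "strict_mono s"
    have "bounded (range (\<lambda>i. f q (s i)))" using bd[of q] by (rule bounded_subset) auto
    moreover have "\<forall>i. f q (s i) \<in> S q" using fS by blast
    ultimately obtain r' y where "strict_mono r'" "y \<in> S q" "((\<lambda>i. f q (s i)) \<circ> r') \<longlonglongrightarrow> y"
      using S[of q, unfolded seqcpt_def, rule_format, of "\<lambda>i. f q (s i)"] by blast
    thus "\<exists>r'. strict_mono r' \<and> (\<exists>l\<in>S q. (\<lambda>i. f q ((s \<circ> r') i)) \<longlonglongrightarrow> l)"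
      by (auto simp: o_def)
  qed
  have "\<exists>l\<in>S q. (\<lambda>i. f q (diagseq i)) \<longlonglongrightarrow> l" for q
  proof -
    have "\<exists>l\<in>S q. (\<lambda>i. f q ((diagseq \<circ> (+) (Suc q)) i)) \<longlonglongrightarrow> l"
    proof (rule diagseq_holds)
      fix r s n assume "strict_mono (r::nat\<Rightarrow>nat)" "\<exists>l\<in>S n. (\<lambda>i. f n (s i)) \<longlonglongrightarrow> l"
      thus "\<exists>l\<in>S n. (\<lambda>i. f n ((s \<circ> r) i)) \<longlonglongrightarrow> l"
        using LIMSEQ_subseq_LIMSEQ[of "\<lambda>i. f n (s i)" _ r] by (auto simp: o_def)
    qed
    then obtain l where "l \<in> S q" "(\<lambda>i. f q (diagseq (i + Suc q))) \<longlonglongrightarrow> l" by (auto simp: o_def add.commute)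
    thus ?thesis using LIMSEQ_offset[of "\<lambda>i. f q (diagseq i)" "Suc q" l] by blast
  qed
  thus ?thesis using subseq_diagseq by blast
qed

lemma construct_blocks:
  fixes a :: "nat \<Rightarrow> nat \<Rightarrow> real" and \<eta> :: real
  assumes A1: "\<And>i. (\<lambda>N. a i N) \<longlonglongrightarrow> 1" and A2: "\<And>N. (\<lambda>i. a i N) \<longlonglongrightarrow> 0" and \<eta>: "\<eta> > 0"
  shows "\<exists>p idx. p 0 = 0 \<and> strict_mono p \<and> (\<forall>k N. N \<le> p k \<longrightarrow> \<bar>a (idx k) N\<bar> \<le> \<eta> / (real k + 1))
     \<and> (\<forall>k l N. k < l \<longrightarrow> p l \<le> N \<longrightarrow> \<bar>a (idx k) N - 1\<bar> \<le> \<eta> / 2^l)"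
proof -
  have exI': "\<exists>i\<ge>I0. \<forall>N\<le>N0. \<bar>a i N\<bar> \<le> \<epsilon>" if e: "\<epsilon> > 0" for N0 \<epsilon> I0
  proof -
    have "\<forall>N\<in>{..N0}. eventually (\<lambda>i. dist (a i N) 0 < \<epsilon>) sequentially"
      using A2[unfolded tendsto_iff, rule_format, OF e] by blast
    hence "eventually (\<lambda>i. \<forall>N\<in>{..N0}. dist (a i N) 0 < \<epsilon>) sequentially"
      by (intro eventually_ball_finite) auto
    then obtain I1 where I1: "\<And>i. i \<ge> I1 \<Longrightarrow> \<forall>N\<in>{..N0}. dist (a i N) 0 < \<epsilon>"
      unfolding eventually_sequentially by blast
    show ?thesis using I1[of "max I1 I0"] by (intro exI[of _ "max I1 I0"]) (auto simp: dist_real_def less_imp_le)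
  qed
  have exP: "\<exists>p>p0. \<forall>N\<ge>p. \<forall>i\<le>I0. \<bar>a i N - 1\<bar> \<le> \<epsilon>" if e: "\<epsilon> > 0" for I0 \<epsilon> p0
  proof -
    have "\<forall>i\<in>{..I0}. eventually (\<lambda>N. dist (a i N) 1 < \<epsilon>) sequentially"
      using A1[unfolded tendsto_iff, rule_format, OF e] by blast
    hence "eventually (\<lambda>N. \<forall>i\<in>{..I0}. dist (a i N) 1 < \<epsilon>) sequentially"
      by (intro eventually_ball_finite) auto
    then obtain N1 where N1: "\<And>N. N \<ge> N1 \<Longrightarrow> \<forall>i\<in>{..I0}. dist (a i N) 1 < \<epsilon>"
      unfolding eventually_sequentially by blast
    show ?thesis using N1 by (intro exI[of _ "max N1 (Suc p0)"]) (auto simp: dist_real_def less_imp_le)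
  qed
  define fI where "fI N0 k I0 = (SOME i. i \<ge> I0 \<and> (\<forall>N\<le>N0. \<bar>a i N\<bar> \<le> \<eta> / (real k + 1)))" for N0 k I0
  define fP where "fP I0 l p0 = (SOME p. p > p0 \<and> (\<forall>N\<ge>p. \<forall>i\<le>I0. \<bar>a i N - 1\<bar> \<le> \<eta> / 2^l))" for I0 l p0
  have fI: "fI Na k Ia \<ge> Ia \<and> (\<forall>N\<le>Na. \<bar>a (fI Na k Ia) N\<bar> \<le> \<eta> / (real k + 1))" for Na k Ia
    unfolding fI_def by (rule someI_ex) (rule exI', use \<eta> in simp)
  have fP: "fP Ia l pa > pa \<and> (\<forall>N\<ge>fP Ia l pa. \<forall>i\<le>Ia. \<bar>a i N - 1\<bar> \<le> \<eta> / 2^l)" for Ia l pa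
    unfolding fP_def by (rule someI_ex) (rule exP, use \<eta> in simp)
  define st where "st = rec_nat (0::nat, 0::nat) (\<lambda>k s. (fP (fI (fst s) k (snd s)) (Suc k) (fst s), fI (fst s) k (snd s)))"
  define p where "p k = fst (st k)" for k
  define idx where "idx k = snd (st (Suc k))" for k
  have p0: "p 0 = 0" unfolding p_def st_def by simp
  have idxe: "idx k = fI (p k) k (snd (st k))" for k unfolding idx_def p_def st_def by simp
  have pS: "p (Suc k) = fP (idx k) (Suc k) (p k)" for k unfolding idx_def p_def st_def by simp
  have sm: "strict_mono p" unfolding strict_mono_Suc_iff using fP pS by metis
  have imono: "idx k \<le> idx (Suc k)" for k
  proof -
    have "snd (st (Suc k)) = idx k" unfolding idx_def ..
    thus ?thesis using fI[where Na="p (Suc k)" and k="Suc k" and Ia="snd (st (Suc k))"] idxe[of "Suc k"] by simp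
  qed
  hence imono': "k \<le> l \<Longrightarrow> idx k \<le> idx l" for k l using incseq_SucI[of idx] unfolding incseq_def by blast
  have C1: "\<forall>k N. N \<le> p k \<longrightarrow> \<bar>a (idx k) N\<bar> \<le> \<eta> / (real k + 1)"
    using fI idxe by metis
  have C2: "\<forall>k l N. k < l \<longrightarrow> p l \<le> N \<longrightarrow> \<bar>a (idx k) N - 1\<bar> \<le> \<eta> / 2^l"
  proof (intro allI impI)
    fix k l N assume kl: "k < l" and N: "p l \<le> N"
    then obtain l' where l: "l = Suc l'" by (cases l) auto
    have "idx k \<le> idx l'" using kl l imono' by simp
    thus "\<bar>a (idx k) N - 1\<bar> \<le> \<eta> / 2^l" using fP[where Ia="idx l'" and l=l and pa="p l'"] pS[of l'] N l by auto
  qed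
  show ?thesis using p0 sm C1 C2 by blast
qed


lemma c0_add: "a \<in> c0 \<Longrightarrow> b \<in> c0 \<Longrightarrow> (\<lambda>n. a n + b n) \<in> c0"
  unfolding c0_def using tendsto_add by fastforce
lemma c0_scl: "a \<in> c0 \<Longrightarrow> (\<lambda>n. c * a n) \<in> c0"
  unfolding c0_def using tendsto_mult_right_zero by fastforce
lemma c0_zero: "(\<lambda>n. 0) \<in> c0" unfolding c0_def by simp
lemma c0_fin: assumes "\<And>n. n \<ge> N \<Longrightarrow> a n = 0" shows "a \<in> c0"
proof -
  have "eventually (\<lambda>n. a n = 0) sequentially" using assms by (auto simp: eventually_sequentially)
  hence "a \<longlonglongrightarrow> 0" by (rule tendsto_eventually)
  thus ?thesis unfolding c0_def by simp
qed

lemma c0_emb_props: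
  assumes "c0_embedding J"
  shows "\<exists>m M. 0 < m \<and> (\<forall>a\<in>c0. m * sup_norm a \<le> norm (J a) \<and> norm (J a) \<le> M * sup_norm a)
     \<and> (\<forall>a\<in>c0. \<forall>b\<in>c0. J (\<lambda>n. a n + b n) = J a + J b) \<and> (\<forall>c. \<forall>a\<in>c0. J (\<lambda>n. c * a n) = c *\<^sub>R J a)"
  using assms unfolding c0_embedding_def by blast

lemma phi_exists:
  fixes J :: "(nat \<Rightarrow> real) \<Rightarrow> 'b::real_normed_vector"
  assumes "c0_embedding J"
  shows "\<exists>\<phi> c. c > 0 \<and> (\<forall>k. bounded_linear (\<phi> k)) \<and> (\<forall>k. \<forall>a\<in>c0. \<phi> k (J a) = a k)
      \<and> (\<forall>k y. \<bar>\<phi> k y\<bar> \<le> c * norm y)"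
proof -
  obtain m M where m: "0 < m" and mb: "\<And>a. a\<in>c0 \<Longrightarrow> m * sup_norm a \<le> norm (J a)"
    and Jadd: "\<And>a b. a\<in>c0 \<Longrightarrow> b\<in>c0 \<Longrightarrow> J (\<lambda>n. a n + b n) = J a + J b"
    and Jscl: "\<And>c a. a\<in>c0 \<Longrightarrow> J (\<lambda>n. c * a n) = c *\<^sub>R J a"
    using c0_emb_props[OF assms] by blast
  have inj: "inj_on J c0"
  proof (rule inj_onI)
    fix a b assume a: "a \<in> c0" and b: "b \<in> c0" and eq: "J a = J b"
    have mb': "(\<lambda>n. (-1) * b n) \<in> c0" using c0_scl[OF b] .
    have d: "(\<lambda>n. a n + (-1) * b n) \<in> c0" using c0_add[OF a mb'] .
    have "J (\<lambda>n. a n + (-1) * b n) = J a + J (\<lambda>n. (-1) * b n)" using Jadd[OF a mb'] by simp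
    also have "J (\<lambda>n. (-1) * b n) = (-1) *\<^sub>R J b" using Jscl[OF b, of "-1"] by simp
    finally have "J (\<lambda>n. a n + (-1) * b n) = J a + (-1) *\<^sub>R J b" .
    hence "J (\<lambda>n. a n + (-1) * b n) = 0" using eq by simp
    hence "m * sup_norm (\<lambda>n. a n + (-1) * b n) \<le> 0" using mb[OF d] by simp
    hence "sup_norm (\<lambda>n. a n + (-1) * b n) \<le> 0" using m by (simp add: mult_le_0_iff)
    hence "\<bar>a k + (-1) * b k\<bar> \<le> 0" for k using sup_ge[OF d, of k] by simp
    hence "a k \<le> b k \<and> b k \<le> a k" for k by (simp add: abs_le_iff)
    thus "a = b" by (intro ext) (meson order_antisym)
  qed
  have sub: "subspace (J ` c0)" unfolding subspace_def
  proof (intro conjI ballI allI)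
    have "J (\<lambda>n. 0) = 0" using Jscl[OF c0_zero, of 0] by simp
    thus "0 \<in> J ` c0" using rev_image_eqI[OF c0_zero, of 0 J] by simp
  next
    fix x y assume "x \<in> J ` c0" "y \<in> J ` c0"
    then obtain a b where "a \<in> c0" "b \<in> c0" "x = J a" "y = J b" by blast
    hence "x + y = J (\<lambda>n. a n + b n)" using Jadd by simp
    thus "x + y \<in> J ` c0" using c0_add \<open>a \<in> c0\<close> \<open>b \<in> c0\<close> by blast
  next
    fix c x assume "x \<in> J ` c0"
    then obtain a where "a \<in> c0" "x = J a" by blast
    hence "c *\<^sub>R x = J (\<lambda>n. c * a n)" using Jscl by simp
    thus "c *\<^sub>R x \<in> J ` c0" using c0_scl \<open>a \<in> c0\<close> by blast
  qed
  have "\<exists>\<phi>. bounded_linear \<phi> \<and> (\<forall>a\<in>c0. \<phi> (J a) = a k) \<and> (\<forall>y. \<bar>\<phi> y\<bar> \<le> (1/m) * norm y)" for k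
  proof -
    define f where "f y = inv_into c0 J y k" for y
    have fJ: "f (J a) = a k" if "a \<in> c0" for a unfolding f_def using inv_into_f_f[OF inj that] by simp
    have "\<exists>g. bounded_linear g \<and> (\<forall>x\<in>J ` c0. g x = f x) \<and> (\<forall>x. \<bar>g x\<bar> \<le> (1/m) * norm x)"
    proof (rule hahn_banach_normed[OF sub])
      fix x y assume "x \<in> J ` c0" "y \<in> J ` c0"
      then obtain a b where ab: "a \<in> c0" "b \<in> c0" "x = J a" "y = J b" by blast
      have "f (x + y) = f (J (\<lambda>n. a n + b n))" using ab Jadd by simp
      also have "\<dots> = a k + b k" using fJ c0_add[OF ab(1,2)] by simp
      finally show "f (x + y) = f x + f y" using ab fJ by simp
    next
      fix x c assume "x \<in> J ` c0"
      then obtain a where a: "a \<in> c0" "x = J a" by blast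
      have "f (c *\<^sub>R x) = f (J (\<lambda>n. c * a n))" using a Jscl by simp
      also have "\<dots> = c * a k" using fJ c0_scl[OF a(1)] by simp
      finally show "f (c *\<^sub>R x) = c * f x" using a fJ by simp
    next
      fix x assume "x \<in> J ` c0"
      then obtain a where a: "a \<in> c0" "x = J a" by blast
      have "\<bar>f x\<bar> = \<bar>a k\<bar>" using a fJ by simp
      also have "\<dots> \<le> sup_norm a" by (rule sup_ge[OF a(1)])
      also have "\<dots> \<le> (1/m) * norm x" using mb[OF a(1)] m a(2) by (simp add: field_simps)
      finally show "\<bar>f x\<bar> \<le> (1/m) * norm x" .
    next
      show "0 \<le> 1/m" using m by simp
    qed
    then obtain g where g: "bounded_linear g" "\<forall>x\<in>J ` c0. g x = f x" "\<forall>x. \<bar>g x\<bar> \<le> (1/m) * norm x"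
      by blast
    have "\<forall>a\<in>c0. g (J a) = a k" using g(2) fJ by simp
    thus ?thesis using g(1,3) by blast
  qed
  hence "\<forall>k. \<exists>\<phi>. bounded_linear \<phi> \<and> (\<forall>a\<in>c0. \<phi> (J a) = a k) \<and> (\<forall>y. \<bar>\<phi> y\<bar> \<le> (1/m) * norm y)" by blast
  from choice[OF this] obtain \<phi> where "\<forall>k. bounded_linear (\<phi> k) \<and> (\<forall>a\<in>c0. \<phi> k (J a) = a k) \<and> (\<forall>y. \<bar>\<phi> k y\<bar> \<le> (1/m) * norm y)"
    by blast
  moreover have "1/m > 0" using m by simp
  ultimately show ?thesis by blast
qed


locale mainctx = ufddc E K for E :: "nat \<Rightarrow> 'a::banach set" and K :: real +
  fixes T :: "'a \<Rightarrow> 'b::banach" and J :: "(nat \<Rightarrow> real) \<Rightarrow> 'b"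
  assumes sh: "is_fdd (fdd_dual E)" and T: "bounded_linear T" and Ts: "surj T" and J: "c0_embedding J"
begin

lemma psi_exists:
  "\<exists>\<psi> r c. c > 0 \<and> strict_mono r \<and> (\<forall>i. bounded_linear (\<psi> i)) \<and> (\<forall>i y. \<bar>\<psi> i y\<bar> \<le> c * norm y)
    \<and> (\<forall>i. \<forall>a\<in>c0. \<psi> i (J a) = a (r (2*i)) - a (r (2*i+1))) \<and> (\<forall>j. \<forall>y\<in>E j. (\<lambda>i. \<psi> i (T y)) \<longlonglongrightarrow> 0)"
proof -
  interpret T: bounded_linear T by (rule T)
  obtain \<phi> c where c: "c > 0" and \<phi>l: "\<And>k. bounded_linear (\<phi> k)" and \<phi>J: "\<And>k a. a\<in>c0 \<Longrightarrow> \<phi> k (J a) = a k"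
    and \<phi>b: "\<And>k y. \<bar>\<phi> k y\<bar> \<le> c * norm y" using phi_exists[OF J] by blast
  have "\<forall>j. \<exists>B. finite B \<and> E j = span B" using Efin by blast
  from choice[OF this] obtain Bs where Bs: "\<forall>j. finite (Bs j) \<and> E j = span (Bs j)" by blast
  define V where "V = insert 0 (\<Union>j. Bs j)"
  have Vc: "countable V" unfolding V_def using Bs countable_finite by auto
  define v where "v = from_nat_into V"
  define f where "f q i = \<phi> i (T (v q))" for q i
  have bd: "bounded (range (f q))" for q unfolding bounded_iff
    using \<phi>b by (auto simp: f_def intro!: exI[of _ "c * norm (T (v q))"])
  obtain r where r: "strict_mono r" and rl: "\<forall>q. \<exists>l\<in>UNIV. (\<lambda>i. f q (r i)) \<longlonglongrightarrow> l"
    using diag_seqcpt[of "\<lambda>q. UNIV" f, OF seqcpt_UNIV_real _ bd] by blast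
  define \<psi> where "\<psi> i y = \<phi> (r (2*i)) y - \<phi> (r (2*i+1)) y" for i y
  have \<psi>l: "bounded_linear (\<psi> i)" for i unfolding \<psi>_def[abs_def] by (intro bounded_linear_sub \<phi>l)
  have \<psi>b: "\<bar>\<psi> i y\<bar> \<le> (2*c) * norm y" for i y
  proof -
    have "\<bar>\<psi> i y\<bar> \<le> \<bar>\<phi> (r (2*i)) y\<bar> + \<bar>\<phi> (r (2*i+1)) y\<bar>" unfolding \<psi>_def by linarith
    also have "\<dots> \<le> c * norm y + c * norm y" using \<phi>b by (intro add_mono)
    finally show ?thesis by simp
  qed
  have \<psi>J: "\<forall>i. \<forall>a\<in>c0. \<psi> i (J a) = a (r (2*i)) - a (r (2*i+1))" unfolding \<psi>_def using \<phi>J by simp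
  have \<psi>T: "bounded_linear (\<lambda>y. \<psi> i (T y))" for i using bounded_linear_compose[OF \<psi>l T] .
  have zV: "(\<lambda>i. \<psi> i (T z)) \<longlonglongrightarrow> 0" if zv: "z \<in> V" for z
  proof -
    obtain q where q: "v q = z" using from_nat_into_surj[OF Vc zv] unfolding v_def by blast
    obtain l where l: "(\<lambda>i. f q (r i)) \<longlonglongrightarrow> l" using rl by blast
    have s2: "strict_mono (\<lambda>i::nat. 2*i)" by (auto simp: strict_mono_def)
    have s3: "strict_mono (\<lambda>i::nat. 2*i+1)" by (auto simp: strict_mono_def)
    have "(\<lambda>i. f q (r (2*i))) \<longlonglongrightarrow> l" using LIMSEQ_subseq_LIMSEQ[OF l s2] by (simp add: o_def)
    moreover have "(\<lambda>i. f q (r (2*i+1))) \<longlonglongrightarrow> l" using LIMSEQ_subseq_LIMSEQ[OF l s3] by (simp add: o_def)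
    ultimately have "(\<lambda>i. f q (r (2*i)) - f q (r (2*i+1))) \<longlonglongrightarrow> l - l" by (rule tendsto_diff)
    thus ?thesis unfolding f_def \<psi>_def q by simp
  qed
  have zspan: "(\<lambda>i. \<psi> i (T y)) \<longlonglongrightarrow> 0" if "y \<in> span V" for y
    using that
  proof (induction rule: span_induct_alt)
    case base
    have "\<psi> i (T 0) = 0" for i using linear_0[OF bounded_linear.linear[OF \<psi>T[of i]]] .
    thus ?case by simp
  next
    case (step a x y)
    have "\<psi> i (T (a *\<^sub>R x + y)) = a * \<psi> i (T x) + \<psi> i (T y)" for i
      using linear_add[OF bounded_linear.linear[OF \<psi>T[of i]]] linear_scale[OF bounded_linear.linear[OF \<psi>T[of i]]] by simp
    moreover have "(\<lambda>i. a * \<psi> i (T x) + \<psi> i (T y)) \<longlonglongrightarrow> a * 0 + 0"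
      by (intro tendsto_intros zV step)
    ultimately show ?case by simp
  qed
  have "\<forall>j. \<forall>y\<in>E j. (\<lambda>i. \<psi> i (T y)) \<longlonglongrightarrow> 0"
  proof (intro allI ballI)
    fix j y assume "y \<in> E j"
    hence "y \<in> span (Bs j)" using Bs by simp
    moreover have "span (Bs j) \<subseteq> span V" unfolding V_def by (intro span_mono) auto
    ultimately show "(\<lambda>i. \<psi> i (T y)) \<longlonglongrightarrow> 0" using zspan by blast
  qed
  moreover have "2*c > 0" using c by simp
  ultimately show ?thesis using r \<psi>l \<psi>b \<psi>J by blast
qed

end

context mainctx
begin

lemma w_exists:
  fixes \<psi> :: "nat \<Rightarrow> 'b \<Rightarrow> real"
  assumes r: "strict_mono r" and \<psi>J: "\<forall>i. \<forall>a\<in>c0. \<psi> i (J a) = a (r (2*i)) - a (r (2*i+1))"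
  shows "\<exists>w B. B \<ge> 0 \<and> (\<forall>M. norm (w M) \<le> B) \<and> (\<forall>M i. \<psi> i (T (w M)) = (if i < M then 1 else 0))"
proof -
  obtain m MJ where Jb: "\<And>a. a\<in>c0 \<Longrightarrow> norm (J a) \<le> MJ * sup_norm a"
    using c0_emb_props[OF J] by blast
  obtain C where C: "C > 0" and lift: "\<And>y. \<exists>x. T x = y \<and> norm x \<le> C * norm y"
    using open_mapping_lift[OF T Ts] by blast
  have "\<forall>y. \<exists>x. T x = y \<and> norm x \<le> C * norm y" using lift by blast
  from choice[OF this] obtain lf where lf0: "\<forall>y. T (lf y) = y \<and> norm (lf y) \<le> C * norm y" by blast
  hence lf: "\<And>y. T (lf y) = y \<and> norm (lf y) \<le> C * norm y" by blast
  define chi where "chi M n = (if (\<exists>l<M. n = r (2*l)) then 1 else (0::real))" for M n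
  have chic0: "chi M \<in> c0" for M
  proof (rule c0_fin[of "r (2*M)"])
    fix n assume n: "r (2*M) \<le> n"
    have "\<not> (\<exists>l<M. n = r (2*l))"
    proof
      assume "\<exists>l<M. n = r (2*l)"
      then obtain l where "l < M" "n = r (2*l)" by blast
      hence "n < r (2*M)" using r by (simp add: strict_mono_less)
      thus False using n by simp
    qed
    thus "chi M n = 0" unfolding chi_def by simp
  qed
  have chisup: "sup_norm (chi M) \<le> 1" for M by (rule sup_le) (simp add: chi_def)
  have chie: "chi M (r (2*i)) = (if i < M then 1 else 0)" for M i
  proof -
    have "(\<exists>l<M. r (2*i) = r (2*l)) \<longleftrightarrow> i < M" using strict_mono_eq[OF r] by auto
    thus ?thesis unfolding chi_def by simp
  qed
  have chio: "chi M (r (2*i+1)) = 0" for M i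
  proof -
    have "\<not> (\<exists>l<M. r (2*i+1) = r (2*l))" using strict_mono_eq[OF r] by presburger
    thus ?thesis unfolding chi_def by simp
  qed
  define w where "w M = lf (J (chi M))" for M
  have wT: "T (w M) = J (chi M)" for M unfolding w_def using lf by blast
  have wb: "norm (w M) \<le> C * \<bar>MJ\<bar>" for M
  proof -
    have "norm (w M) \<le> C * norm (J (chi M))" unfolding w_def using lf by blast
    also have "norm (J (chi M)) \<le> MJ * sup_norm (chi M)" by (rule Jb[OF chic0])
    also have "\<dots> \<le> \<bar>MJ\<bar> * 1"
    proof -
      have "MJ * sup_norm (chi M) \<le> \<bar>MJ\<bar> * sup_norm (chi M)"
        using sup_nonneg[OF chic0[of M]] by (intro mult_right_mono) auto
      also have "\<dots> \<le> \<bar>MJ\<bar> * 1" using chisup[of M] by (intro mult_left_mono) auto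
      finally show ?thesis .
    qed
    finally show ?thesis using C by (simp add: mult_left_mono)
  qed
  have "\<psi> i (T (w M)) = (if i < M then 1 else 0)" for M i
    using \<psi>J chic0[of M] chie chio wT by simp
  moreover have "C * \<bar>MJ\<bar> \<ge> 0" using C by simp
  ultimately show ?thesis using wb by blast
qed

lemma omega_exists:
  fixes w :: "nat \<Rightarrow> 'a"
  assumes wb: "\<And>M. norm (w M) \<le> B"
  shows "\<exists>\<sigma> \<omega>. strict_mono \<sigma> \<and> (\<forall>j. \<omega> j \<in> E j) \<and> (\<forall>j. (\<lambda>M. fdd_proj E j (w (\<sigma> M))) \<longlonglongrightarrow> \<omega> j)"
proof -
  have S: "seqcpt (E j)" for j
  proof -
    obtain Bs where "finite Bs" "E j = span Bs" using Efin by blast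
    thus ?thesis using seqcpt_span by simp
  qed
  have bd: "bounded (range (\<lambda>M. fdd_proj E j (w M)))" for j unfolding bounded_iff
  proof (intro exI ballI)
    fix z assume "z \<in> range (\<lambda>M. fdd_proj E j (w M))"
    then obtain M where z: "z = fdd_proj E j (w M)" by blast
    have "norm z \<le> 2 * K1 * norm (w M)" unfolding z by (rule proj_bound)
    also have "\<dots> \<le> \<bar>2 * K1\<bar> * norm (w M)" by (intro mult_right_mono) auto
    also have "\<dots> \<le> \<bar>2 * K1\<bar> * B" using wb by (intro mult_left_mono) auto
    finally show "norm z \<le> \<bar>2 * K1\<bar> * B" .
  qed
  show ?thesis
    using diag_seqcpt[of E "\<lambda>j M. fdd_proj E j (w M)", OF S projE bd] by metis
qed

lemma Omega_props:
  fixes \<psi> :: "nat \<Rightarrow> 'b \<Rightarrow> real" and w :: "nat \<Rightarrow> 'a"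
  assumes \<psi>l: "\<And>i. bounded_linear (\<psi> i)"
    and \<psi>w: "\<And>M i. \<psi> i (T (w M)) = (if i < M then 1 else 0)"
    and \<psi>E0: "\<forall>j. \<forall>y\<in>E j. (\<lambda>i. \<psi> i (T y)) \<longlonglongrightarrow> 0"
    and wb: "\<And>M. norm (w M) \<le> B"
    and \<sigma>: "strict_mono \<sigma>" and \<omega>E: "\<And>j. \<omega> j \<in> E j"
    and \<omega>l: "\<And>j. (\<lambda>M. fdd_proj E j (w (\<sigma> M))) \<longlonglongrightarrow> \<omega> j"
  shows "\<forall>N. norm (\<Sum>j<N. \<omega> j) \<le> \<bar>K1\<bar> * B"
    and "\<forall>i. (\<lambda>N. \<psi> i (T (\<Sum>j<N. \<omega> j))) \<longlonglongrightarrow> 1"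
    and "\<forall>N. (\<lambda>i. \<psi> i (T (\<Sum>j<N. \<omega> j))) \<longlonglongrightarrow> 0"
proof -
  have \<psi>E: "\<And>j y. y \<in> E j \<Longrightarrow> (\<lambda>i. \<psi> i (T y)) \<longlonglongrightarrow> 0" using \<psi>E0 by blast
  have \<psi>T: "bounded_linear (\<lambda>y. \<psi> i (T y))" for i using bounded_linear_compose[OF \<psi>l T] .
  have SNl: "(\<lambda>M. SN N (w (\<sigma> M))) \<longlonglongrightarrow> (\<Sum>j<N. \<omega> j)" for N
    unfolding SN_def by (intro tendsto_sum \<omega>l)
  show "\<forall>N. norm (\<Sum>j<N. \<omega> j) \<le> \<bar>K1\<bar> * B"
  proof
    fix N
    have "norm (SN N (w (\<sigma> M))) \<le> \<bar>K1\<bar> * B" for M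
    proof -
      have "norm (SN N (w (\<sigma> M))) \<le> K1 * norm (w (\<sigma> M))" by (rule SN_bound)
      also have "\<dots> \<le> \<bar>K1\<bar> * norm (w (\<sigma> M))" by (intro mult_right_mono) auto
      also have "\<dots> \<le> \<bar>K1\<bar> * B" using wb by (intro mult_left_mono) auto
      finally show ?thesis .
    qed
    thus "norm (\<Sum>j<N. \<omega> j) \<le> \<bar>K1\<bar> * B"
      using LIMSEQ_le_const2[OF tendsto_norm[OF SNl[of N]]] by blast
  qed
  show "\<forall>N. (\<lambda>i. \<psi> i (T (\<Sum>j<N. \<omega> j))) \<longlonglongrightarrow> 0"
  proof
    fix N
    have "\<psi> i (T (\<Sum>j<N. \<omega> j)) = (\<Sum>j<N. \<psi> i (T (\<omega> j)))" for i
      using linear_sum[OF bounded_linear.linear[OF \<psi>T[of i]]] by simp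
    moreover have "(\<lambda>i. \<Sum>j<N. \<psi> i (T (\<omega> j))) \<longlonglongrightarrow> 0"
      by (intro tendsto_null_sum) (rule \<psi>E[OF \<omega>E])
    ultimately show "(\<lambda>i. \<psi> i (T (\<Sum>j<N. \<omega> j))) \<longlonglongrightarrow> 0" by simp
  qed
  show "\<forall>i. (\<lambda>N. \<psi> i (T (\<Sum>j<N. \<omega> j))) \<longlonglongrightarrow> 1"
  proof
    fix i
    obtain \<epsilon> where \<epsilon>0: "\<epsilon> \<longlonglongrightarrow> 0" and \<epsilon>b: "\<And>N x. \<bar>\<psi> i (T x) - \<psi> i (T (SN N x))\<bar> \<le> \<epsilon> N * norm x"
      using shrink_tail[OF sh \<psi>T[of i]] by blast
    have key: "\<bar>\<psi> i (T (\<Sum>j<N. \<omega> j)) - 1\<bar> \<le> \<bar>\<epsilon> N\<bar> * B" for N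
    proof -
      have ev: "\<bar>\<psi> i (T (SN N (w (\<sigma> M)))) - 1\<bar> \<le> \<bar>\<epsilon> N\<bar> * B" if M: "M \<ge> Suc i" for M
      proof -
        have "\<sigma> M \<ge> M" using seq_suble[OF \<sigma>] .
        hence "\<psi> i (T (w (\<sigma> M))) = 1" using \<psi>w M by simp
        hence "\<bar>\<psi> i (T (SN N (w (\<sigma> M)))) - 1\<bar> = \<bar>\<psi> i (T (w (\<sigma> M))) - \<psi> i (T (SN N (w (\<sigma> M))))\<bar>"
          by simp
        also have "\<dots> \<le> \<epsilon> N * norm (w (\<sigma> M))" by (rule \<epsilon>b)
        also have "\<dots> \<le> \<bar>\<epsilon> N\<bar> * norm (w (\<sigma> M))" by (intro mult_right_mono) auto
        also have "\<dots> \<le> \<bar>\<epsilon> N\<bar> * B" using wb by (intro mult_left_mono) auto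
        finally show ?thesis .
      qed
      have "(\<lambda>M. \<bar>\<psi> i (T (SN N (w (\<sigma> M)))) - 1\<bar>) \<longlonglongrightarrow> \<bar>\<psi> i (T (\<Sum>j<N. \<omega> j)) - 1\<bar>"
        by (intro tendsto_intros bounded_linear.tendsto[OF \<psi>T] SNl)
      thus ?thesis using LIMSEQ_le_const2 ev by blast
    qed
    have "(\<lambda>N. \<psi> i (T (\<Sum>j<N. \<omega> j)) - 1) \<longlonglongrightarrow> 0"
    proof (rule Lim_null_comparison)
      show "\<forall>\<^sub>F N in sequentially. norm (\<psi> i (T (\<Sum>j<N. \<omega> j)) - 1) \<le> \<bar>\<epsilon> N\<bar> * B" using key by simp
      show "(\<lambda>N. \<bar>\<epsilon> N\<bar> * B) \<longlonglongrightarrow> 0" using tendsto_mult_left_zero[OF tendsto_rabs_zero[OF \<epsilon>0]] by simp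
    qed
    hence "(\<lambda>N. (\<psi> i (T (\<Sum>j<N. \<omega> j)) - 1) + 1) \<longlonglongrightarrow> 0 + 1" by (intro tendsto_add) auto
    thus "(\<lambda>N. \<psi> i (T (\<Sum>j<N. \<omega> j))) \<longlonglongrightarrow> 1" by simp
  qed
qed

end

lemma lower_abstract:
  fixes a :: "nat \<Rightarrow> nat \<Rightarrow> real" and p idx :: "nat \<Rightarrow> nat" and c :: "nat \<Rightarrow> real"
  assumes \<eta>: "\<eta> > 0" and sm: "strict_mono p"
    and C1: "\<forall>k N. N \<le> p k \<longrightarrow> \<bar>a (idx k) N\<bar> \<le> \<eta> / (real k + 1)"
    and C2: "\<forall>k l N. k < l \<longrightarrow> p l \<le> N \<longrightarrow> \<bar>a (idx k) N - 1\<bar> \<le> \<eta> / 2^l"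
    and kn: "k < n" and cb: "\<And>l. l < n \<Longrightarrow> \<bar>c l\<bar> \<le> Mx"
  shows "\<bar>\<Sum>l<n. c l * (a (idx k) (p (Suc l)) - a (idx k) (p l))\<bar> \<ge> \<bar>c k\<bar> * (1 - 2*\<eta>) - 6*\<eta>*Mx"
proof -
  define \<beta> where "\<beta> l = a (idx k) (p (Suc l)) - a (idx k) (p l)" for l
  define e where "e l = (if l < k then 2*\<eta>/(real k+1) else 0) + 2*\<eta>*(1/2)^l" for l
  have Mx0: "Mx \<ge> 0" using cb[OF kn] by linarith
  have pm: "i \<le> j \<Longrightarrow> p i \<le> p j" for i j using sm by (simp add: strict_mono_less_eq)
  have e0: "e l \<ge> 0" for l unfolding e_def using \<eta> by auto
  have \<beta>b: "\<bar>\<beta> l\<bar> \<le> e l" if "l \<noteq> k" for l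
  proof (cases "l < k")
    case True
    have "\<bar>a (idx k) (p (Suc l))\<bar> \<le> \<eta> / (real k + 1)" using C1 pm[of "Suc l" k] True by simp
    moreover have "\<bar>a (idx k) (p l)\<bar> \<le> \<eta> / (real k + 1)" using C1 pm[of l k] True by simp
    ultimately have "\<bar>\<beta> l\<bar> \<le> 2*\<eta>/(real k+1)" unfolding \<beta>_def by (simp add: abs_le_iff)
    moreover have "0 \<le> 2*\<eta>*(1/2::real)^l" using \<eta> by simp
    ultimately show ?thesis unfolding e_def using True by simp
  next
    case False
    hence kl: "k < l" using that by simp
    have "\<bar>a (idx k) (p (Suc l)) - 1\<bar> \<le> \<eta> / 2^l" using C2 kl pm[of l "Suc l"] by simp
    moreover have "\<bar>a (idx k) (p l) - 1\<bar> \<le> \<eta> / 2^l" using C2 kl by simp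
    ultimately have "\<bar>\<beta> l\<bar> \<le> 2*\<eta>/2^l" unfolding \<beta>_def by (simp add: abs_le_iff)
    thus ?thesis unfolding e_def using False by (simp add: power_one_over)
  qed
  have \<beta>k: "\<beta> k \<ge> 1 - 2*\<eta>"
  proof -
    have "\<bar>a (idx k) (p (Suc k)) - 1\<bar> \<le> \<eta> / 2^Suc k" using C2[rule_format, of k "Suc k" "p (Suc k)"] by simp
    also have "\<dots> \<le> \<eta>"
    proof -
      have "(1::real) \<le> 2^Suc k" by (rule one_le_power) simp
      thus ?thesis using \<eta> by (simp add: field_simps)
    qed
    finally have 1: "a (idx k) (p (Suc k)) \<ge> 1 - \<eta>" by (simp add: abs_le_iff)
    have "\<bar>a (idx k) (p k)\<bar> \<le> \<eta> / (real k + 1)" using C1 by simp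
    also have "\<dots> \<le> \<eta>" using \<eta> by (simp add: field_simps)
    finally have 2: "a (idx k) (p k) \<le> \<eta>" by (simp add: abs_le_iff)
    show ?thesis unfolding \<beta>_def using 1 2 by simp
  qed
  have esum: "(\<Sum>l<n. e l) \<le> 6*\<eta>"
  proof -
    have "(\<Sum>l<n. e l) = (\<Sum>l<n. (if l < k then 2*\<eta>/(real k+1) else 0)) + 2*\<eta> * (\<Sum>l<n. (1/2::real)^l)"
      unfolding e_def by (simp add: sum.distrib sum_distrib_left)
    also have "(\<Sum>l<n. (if l < k then 2*\<eta>/(real k+1) else 0)) = (\<Sum>l<k. 2*\<eta>/(real k+1))"
    proof -
      have "{..<n} \<inter> {l. l < k} = {..<k}" using kn by auto
      thus ?thesis by (simp add: sum.If_cases)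
    qed
    also have "\<dots> = real k * (2*\<eta>/(real k+1))" by simp
    also have "\<dots> \<le> 2*\<eta>" using \<eta> by (simp add: field_simps)
    also have "(\<Sum>l<n. (1/2::real)^l) \<le> 2" using geometric_sum_less[of "1/2::real" "{..<n}"] by simp
    finally show ?thesis using \<eta> by simp
  qed
  have split: "(\<Sum>l<n. c l * \<beta> l) = c k * \<beta> k + (\<Sum>l\<in>{..<n}-{k}. c l * \<beta> l)"
    using kn by (simp add: sum.remove)
  have "\<bar>\<Sum>l\<in>{..<n}-{k}. c l * \<beta> l\<bar> \<le> (\<Sum>l\<in>{..<n}-{k}. \<bar>c l * \<beta> l\<bar>)" by (rule sum_abs)
  also have "\<dots> \<le> (\<Sum>l\<in>{..<n}-{k}. Mx * e l)"
  proof (rule sum_mono)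
    fix l assume "l \<in> {..<n}-{k}"
    hence "\<bar>c l\<bar> \<le> Mx" "\<bar>\<beta> l\<bar> \<le> e l" using cb \<beta>b by auto
    thus "\<bar>c l * \<beta> l\<bar> \<le> Mx * e l" by (simp add: abs_mult mult_mono' Mx0)
  qed
  also have "\<dots> \<le> (\<Sum>l<n. Mx * e l)" by (rule sum_mono2) (use e0 Mx0 in auto)
  also have "\<dots> = Mx * (\<Sum>l<n. e l)" by (simp add: sum_distrib_left)
  also have "\<dots> \<le> Mx * (6*\<eta>)" using esum Mx0 by (intro mult_left_mono)
  finally have rest: "\<bar>\<Sum>l\<in>{..<n}-{k}. c l * \<beta> l\<bar> \<le> 6*\<eta>*Mx" by (simp add: mult.commute mult.left_commute)
  have "\<bar>c k\<bar> * (1 - 2*\<eta>) \<le> \<bar>c k\<bar> * \<bar>\<beta> k\<bar>" using \<beta>k by (intro mult_left_mono) auto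
  also have "\<dots> = \<bar>c k * \<beta> k\<bar>" by (simp add: abs_mult)
  finally have "\<bar>c k\<bar> * (1 - 2*\<eta>) \<le> \<bar>c k * \<beta> k\<bar>" .
  hence "\<bar>c k\<bar> * (1 - 2*\<eta>) - 6*\<eta>*Mx \<le> \<bar>\<Sum>l<n. c l * \<beta> l\<bar>" using split rest by linarith
  thus ?thesis unfolding \<beta>_def .
qed


context ufddc
begin

lemma upper_blocks:
  assumes \<omega>E: "\<And>j. \<omega> j \<in> E j" and sm: "strict_mono p" and cb: "\<And>l. l < n \<Longrightarrow> \<bar>c l\<bar> \<le> Mx" and Mx0: "Mx \<ge> 0"
  shows "norm (\<Sum>l<n. c l *\<^sub>R (\<Sum>j\<in>{p l..<p (Suc l)}. \<omega> j)) \<le> Mx * \<bar>K\<bar> * norm (\<Sum>j<p n. \<omega> j)"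
proof -
  have pm: "i \<le> j \<Longrightarrow> p i \<le> p j" for i j using sm by (simp add: strict_mono_less_eq)
  define d where "d j = (\<Sum>l<n. (if p l \<le> j \<and> j < p (Suc l) then c l else 0))" for j
  have A: "(\<Sum>j<p n. d j *\<^sub>R \<omega> j) = (\<Sum>l<n. c l *\<^sub>R (\<Sum>j\<in>{p l..<p (Suc l)}. \<omega> j))"
  proof -
    have "(\<Sum>j<p n. d j *\<^sub>R \<omega> j) = (\<Sum>j<p n. \<Sum>l<n. (if p l \<le> j \<and> j < p (Suc l) then c l *\<^sub>R \<omega> j else 0))"
      unfolding d_def scaleR_sum_left by (intro sum.cong refl) simp
    also have "\<dots> = (\<Sum>l<n. \<Sum>j<p n. (if p l \<le> j \<and> j < p (Suc l) then c l *\<^sub>R \<omega> j else 0))"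
      by (rule sum.swap)
    also have "\<dots> = (\<Sum>l<n. c l *\<^sub>R (\<Sum>j\<in>{p l..<p (Suc l)}. \<omega> j))"
    proof (rule sum.cong[OF refl])
      fix l assume l: "l \<in> {..<n}"
      have "{..<p n} \<inter> {j. p l \<le> j \<and> j < p (Suc l)} = {p l..<p (Suc l)}"
        using pm[of "Suc l" n] l by auto
      hence "(\<Sum>j<p n. (if p l \<le> j \<and> j < p (Suc l) then c l *\<^sub>R \<omega> j else 0)) = (\<Sum>j\<in>{p l..<p (Suc l)}. c l *\<^sub>R \<omega> j)"
        by (simp add: sum.If_cases)
      thus "(\<Sum>j<p n. (if p l \<le> j \<and> j < p (Suc l) then c l *\<^sub>R \<omega> j else 0)) = c l *\<^sub>R (\<Sum>j\<in>{p l..<p (Suc l)}. \<omega> j)"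
        by (simp add: scaleR_sum_right)
    qed
    finally show ?thesis .
  qed
  have B: "\<bar>d j\<bar> \<le> Mx" for j
  proof (cases "\<exists>l0<n. p l0 \<le> j \<and> j < p (Suc l0)")
    case True
    then obtain l0 where l0: "l0 < n" "p l0 \<le> j" "j < p (Suc l0)" by blast
    have "(if p l \<le> j \<and> j < p (Suc l) then c l else 0) = (if l = l0 then c l else 0)" if "l < n" for l
    proof (cases "l = l0")
      case True thus ?thesis using l0 by simp
    next
      case False
      show ?thesis
      proof (cases "l < l0")
        case True
        hence "p (Suc l) \<le> p l0" using pm by simp
        thus ?thesis using l0 False by auto
      next
        case False': False
        hence "Suc l0 \<le> l" using False by simp
        hence "p (Suc l0) \<le> p l" using pm by simp
        thus ?thesis using l0 False by auto
      qed
    qed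
    hence "d j = (\<Sum>l<n. (if l = l0 then c l else 0))" unfolding d_def by (intro sum.cong) auto
    also have "\<dots> = c l0" using l0(1) by simp
    finally show ?thesis using cb l0(1) by simp
  next
    case False
    hence "d j = 0" unfolding d_def by (intro sum.neutral) auto
    thus ?thesis using Mx0 by simp
  qed
  show ?thesis
  proof (cases "Mx = 0")
    case True
    hence "d j = 0" for j using B[of j] by simp
    hence "(\<Sum>j<p n. d j *\<^sub>R \<omega> j) = 0" by simp
    thus ?thesis using A True by simp
  next
    case False
    hence Mp: "Mx > 0" using Mx0 by simp
    have "norm (\<Sum>j<p n. (d j / Mx) *\<^sub>R \<omega> j) \<le> K * norm (\<Sum>j<p n. \<omega> j)"
    proof (rule convex_unc[OF \<omega>E])
      fix i
      have "\<bar>d i\<bar> / Mx \<le> 1" using B[of i] Mp by (simp add: pos_divide_le_eq)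
      thus "\<bar>d i / Mx\<bar> \<le> 1" using Mp by (simp add: abs_divide)
    qed
    moreover have "(\<Sum>j<p n. (d j / Mx) *\<^sub>R \<omega> j) = (1/Mx) *\<^sub>R (\<Sum>j<p n. d j *\<^sub>R \<omega> j)"
      by (simp add: scaleR_sum_right)
    ultimately have "(1/Mx) * norm (\<Sum>j<p n. d j *\<^sub>R \<omega> j) \<le> K * norm (\<Sum>j<p n. \<omega> j)"
      using Mp by simp
    hence "Mx * ((1/Mx) * norm (\<Sum>j<p n. d j *\<^sub>R \<omega> j)) \<le> Mx * (K * norm (\<Sum>j<p n. \<omega> j))"
      using Mp by (intro mult_left_mono) auto
    hence "norm (\<Sum>j<p n. d j *\<^sub>R \<omega> j) \<le> Mx * (K * norm (\<Sum>j<p n. \<omega> j))"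
      using Mp by simp
    also have "K * norm (\<Sum>j<p n. \<omega> j) \<le> \<bar>K\<bar> * norm (\<Sum>j<p n. \<omega> j)" by (intro mult_right_mono) auto
    hence "Mx * (K * norm (\<Sum>j<p n. \<omega> j)) \<le> Mx * (\<bar>K\<bar> * norm (\<Sum>j<p n. \<omega> j))" using Mp by (intro mult_left_mono) auto
    finally show ?thesis using A by (simp add: mult.assoc)
  qed
qed

end

context mainctx
begin

theorem main_fix: "fixes_copy_of_c0 T"
proof -
  have Tl: "linear T" using T by (rule bounded_linear.linear)
  obtain \<psi> r c\<psi> where c\<psi>: "c\<psi> > 0" and r: "strict_mono r" and \<psi>l: "\<And>i. bounded_linear (\<psi> i)"
    and \<psi>b: "\<And>i y. \<bar>\<psi> i y\<bar> \<le> c\<psi> * norm y" and \<psi>J: "\<forall>i. \<forall>a\<in>c0. \<psi> i (J a) = a (r (2*i)) - a (r (2*i+1))"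
    and \<psi>E: "\<forall>j. \<forall>y\<in>E j. (\<lambda>i. \<psi> i (T y)) \<longlonglongrightarrow> 0"
    using psi_exists by blast
  obtain w B where B0: "B \<ge> 0" and wb: "\<And>M. norm (w M) \<le> B"
    and \<psi>w: "\<And>M i. \<psi> i (T (w M)) = (if i < M then 1 else 0)"
    using w_exists[OF r \<psi>J] by blast
  obtain \<sigma> \<omega> where \<sigma>: "strict_mono \<sigma>" and \<omega>E: "\<And>j. \<omega> j \<in> E j"
    and \<omega>l: "\<And>j. (\<lambda>M. fdd_proj E j (w (\<sigma> M))) \<longlonglongrightarrow> \<omega> j"
    using omega_exists[of w B] wb by blast
  note OP = Omega_props[where \<psi>=\<psi> and w=w and B=B and \<sigma>=\<sigma> and \<omega>=\<omega>, OF \<psi>l \<psi>w \<psi>E wb \<sigma> \<omega>E \<omega>l]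
  define Om where "Om N = (\<Sum>j<N. \<omega> j)" for N
  define a where "a i N = \<psi> i (T (Om N))" for i N
  have A1: "(\<lambda>N. a i N) \<longlonglongrightarrow> 1" for i using OP(2) unfolding a_def Om_def by blast
  have A2: "(\<lambda>i. a i N) \<longlonglongrightarrow> 0" for N using OP(3) unfolding a_def Om_def by blast
  have Omb: "norm (Om N) \<le> \<bar>K1\<bar> * B" for N using OP(1) unfolding Om_def by blast
  define \<eta> where "\<eta> = (1/16::real)"
  have \<eta>0: "\<eta> > 0" unfolding \<eta>_def by simp
  obtain p idx where p0: "p 0 = 0" and sm: "strict_mono p"
    and C1: "\<forall>k N. N \<le> p k \<longrightarrow> \<bar>a (idx k) N\<bar> \<le> \<eta> / (real k + 1)"
    and C2: "\<forall>k l N. k < l \<longrightarrow> p l \<le> N \<longrightarrow> \<bar>a (idx k) N - 1\<bar> \<le> \<eta> / 2^l"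
    using construct_blocks[OF A1 A2 \<eta>0] by blast
  define g where "g l = (\<Sum>j\<in>{p l..<p (Suc l)}. \<omega> j)" for l
  define Cu where "Cu = \<bar>K\<bar> * (\<bar>K1\<bar> * B) + 1"
  have Cu: "Cu > 0"
  proof -
    have "0 \<le> \<bar>K\<bar> * (\<bar>K1\<bar> * B)" using B0 by simp
    thus ?thesis unfolding Cu_def by linarith
  qed
  have upper: "norm (\<Sum>l<n. c l *\<^sub>R g l) \<le> Mx * Cu" if cb: "\<And>l. l<n \<Longrightarrow> \<bar>c l\<bar> \<le> Mx" and Mx0: "Mx \<ge> 0" for n c Mx
  proof -
    have "norm (\<Sum>l<n. c l *\<^sub>R g l) \<le> Mx * \<bar>K\<bar> * norm (\<Sum>j<p n. \<omega> j)"
      unfolding g_def by (rule upper_blocks[OF \<omega>E sm cb Mx0])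
    also have "\<dots> \<le> Mx * \<bar>K\<bar> * (\<bar>K1\<bar> * B)"
      using Omb[of "p n"] Mx0 unfolding Om_def by (intro mult_left_mono) auto
    also have "\<dots> \<le> Mx * Cu" unfolding Cu_def using Mx0 by (simp add: mult.assoc mult_left_mono)
    finally show ?thesis .
  qed
  have \<psi>T: "bounded_linear (\<lambda>y. \<psi> i (T y))" for i using bounded_linear_compose[OF \<psi>l T] .
  have gdiff: "g l = Om (p (Suc l)) - Om (p l)" for l
  proof -
    have "p l \<le> p (Suc l)" using sm by (simp add: strict_mono_less_eq)
    thus ?thesis unfolding g_def Om_def
      using sum.atLeastLessThan_concat[of 0 "p l" "p (Suc l)" \<omega>] by (simp add: atLeast0LessThan eq_diff_eq add.commute)
  qed
  have psig: "\<psi> (idx k) (T (\<Sum>l<n. c l *\<^sub>R g l)) = (\<Sum>l<n. c l * (a (idx k) (p (Suc l)) - a (idx k) (p l)))" for k n c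
  proof -
    have lin: "linear (\<lambda>y. \<psi> (idx k) (T y))" using \<psi>T by (rule bounded_linear.linear)
    have "\<psi> (idx k) (T (\<Sum>l<n. c l *\<^sub>R g l)) = (\<Sum>l<n. \<psi> (idx k) (T (c l *\<^sub>R g l)))"
      by (rule linear_sum[OF lin])
    also have "\<dots> = (\<Sum>l<n. c l * \<psi> (idx k) (T (g l)))"
      using linear_scale[OF lin] by simp
    also have "\<dots> = (\<Sum>l<n. c l * (a (idx k) (p (Suc l)) - a (idx k) (p l)))"
      unfolding gdiff a_def using linear_diff[OF lin] by simp
    finally show ?thesis .
  qed
  have lower: "\<bar>c k\<bar> * (7/8) - (3/8) * Mx \<le> c\<psi> * norm (T (\<Sum>l<n. c l *\<^sub>R g l))"
    if kn: "k < n" and cb: "\<And>l. l<n \<Longrightarrow> \<bar>c l\<bar> \<le> Mx" for n c Mx k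
  proof -
    have "\<bar>c k\<bar> * (1 - 2*\<eta>) - 6*\<eta>*Mx \<le> \<bar>\<Sum>l<n. c l * (a (idx k) (p (Suc l)) - a (idx k) (p l))\<bar>"
      by (rule lower_abstract[where c=c and Mx=Mx and a=a and p=p and idx=idx and \<eta>=\<eta> and k=k and n=n, OF \<eta>0 sm C1 C2 kn cb])
    also have "\<dots> = \<bar>\<psi> (idx k) (T (\<Sum>l<n. c l *\<^sub>R g l))\<bar>" using psig by simp
    also have "\<dots> \<le> c\<psi> * norm (T (\<Sum>l<n. c l *\<^sub>R g l))" by (rule \<psi>b)
    finally show ?thesis unfolding \<eta>_def by simp
  qed
  define J' where "J' x = suminf (\<lambda>l. x l *\<^sub>R g l)" for x :: "nat \<Rightarrow> real"
  have summ: "summable (\<lambda>l. x l *\<^sub>R g l)" if x: "x \<in> c0" for x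
    unfolding summable_Cauchy
  proof (intro allI impI)
    fix e :: real assume e: "e > 0"
    have "x \<longlonglongrightarrow> 0" using x unfolding c0_def by simp
    moreover have "e / (2*Cu) > 0" using e Cu by simp
    ultimately obtain N where N: "\<And>l. l \<ge> N \<Longrightarrow> norm (x l - 0) < e / (2*Cu)"
      unfolding LIMSEQ_iff by blast
    show "\<exists>N. \<forall>m\<ge>N. \<forall>n. norm (sum (\<lambda>l. x l *\<^sub>R g l) {m..<n}) < e"
    proof (intro exI allI impI)
      fix m n assume m: "N \<le> m"
      have "{l \<in> {..<n}. m \<le> l} = {m..<n}" by auto
      hence "sum (\<lambda>l. x l *\<^sub>R g l) {m..<n} = (\<Sum>l<n. if m \<le> l then x l *\<^sub>R g l else 0)"
        using sum.inter_filter[of "{..<n}" "\<lambda>l. x l *\<^sub>R g l" "\<lambda>l. m \<le> l"] by simp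
      also have "\<dots> = (\<Sum>l<n. (if m \<le> l then x l else 0) *\<^sub>R g l)" by (intro sum.cong) auto
      finally have eq: "sum (\<lambda>l. x l *\<^sub>R g l) {m..<n} = (\<Sum>l<n. (if m \<le> l then x l else 0) *\<^sub>R g l)" .
      have "norm (\<Sum>l<n. (if m \<le> l then x l else 0) *\<^sub>R g l) \<le> (e / (2*Cu)) * Cu"
      proof (rule upper)
        fix l assume "l < n"
        show "\<bar>if m \<le> l then x l else 0\<bar> \<le> e / (2*Cu)"
          using N[of l] m e Cu by (auto simp: less_imp_le)
      next
        show "0 \<le> e / (2*Cu)" using e Cu by simp
      qed
      also have "\<dots> < e" using e Cu by simp
      finally show "norm (sum (\<lambda>l. x l *\<^sub>R g l) {m..<n}) < e" using eq by simp
    qed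
  qed
  have Ub: "norm (J' x) \<le> Cu * sup_norm x" if x: "x \<in> c0" for x
  proof -
    have lim: "(\<lambda>n. norm (\<Sum>l<n. x l *\<^sub>R g l)) \<longlonglongrightarrow> norm (J' x)"
      unfolding J'_def by (intro tendsto_norm summable_LIMSEQ summ x)
    have "norm (\<Sum>l<n. x l *\<^sub>R g l) \<le> Cu * sup_norm x" for n
    proof -
      have "norm (\<Sum>l<n. x l *\<^sub>R g l) \<le> sup_norm x * Cu"
        by (rule upper) (use sup_ge[OF x] sup_nonneg[OF x] in auto)
      thus ?thesis by (simp add: mult.commute)
    qed
    thus ?thesis using LIMSEQ_le_const2[OF lim] by blast
  qed
  have Lb: "sup_norm x \<le> 2 * c\<psi> * norm (T (J' x))" if x: "x \<in> c0" for x
  proof -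
    have limT: "(\<lambda>n. c\<psi> * norm (T (\<Sum>l<n. x l *\<^sub>R g l))) \<longlonglongrightarrow> c\<psi> * norm (T (J' x))"
      unfolding J'_def by (intro tendsto_intros bounded_linear.tendsto[OF T] summable_LIMSEQ summ x)
    have k: "\<bar>x k\<bar> * (7/8) - (3/8) * sup_norm x \<le> c\<psi> * norm (T (J' x))" for k
    proof -
      have "\<forall>n\<ge>Suc k. \<bar>x k\<bar> * (7/8) - (3/8) * sup_norm x \<le> c\<psi> * norm (T (\<Sum>l<n. x l *\<^sub>R g l))"
      proof (intro allI impI)
        fix n assume "Suc k \<le> n"
        thus "\<bar>x k\<bar> * (7/8) - (3/8) * sup_norm x \<le> c\<psi> * norm (T (\<Sum>l<n. x l *\<^sub>R g l))"
          by (intro lower) (use sup_ge[OF x] in auto)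
      qed
      thus ?thesis using LIMSEQ_le_const[OF limT] by blast
    qed
    have "sup_norm x \<le> (8/7) * (c\<psi> * norm (T (J' x)) + (3/8) * sup_norm x)"
    proof (rule sup_le)
      fix k
      have "\<bar>x k\<bar> * (7/8) \<le> c\<psi> * norm (T (J' x)) + (3/8) * sup_norm x" using k[of k] by linarith
      hence "(8/7) * (\<bar>x k\<bar> * (7/8)) \<le> (8/7) * (c\<psi> * norm (T (J' x)) + (3/8) * sup_norm x)"
        by (rule mult_left_mono) simp
      thus "\<bar>x k\<bar> \<le> (8/7) * (c\<psi> * norm (T (J' x)) + (3/8) * sup_norm x)" by simp
    qed
    hence "(7/8) * sup_norm x \<le> (7/8) * ((8/7) * (c\<psi> * norm (T (J' x)) + (3/8) * sup_norm x))"
      by (rule mult_left_mono) simp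
    hence "(7/8) * sup_norm x \<le> c\<psi> * norm (T (J' x)) + (3/8) * sup_norm x" by simp
    thus ?thesis by linarith
  qed
  obtain nT where nT: "nT > 0" "\<And>x. norm (T x) \<le> norm x * nT"
    using bounded_linear.pos_bounded[OF T] by blast
  have emb: "c0_embedding J'" unfolding c0_embedding_def
  proof (intro conjI ballI allI)
    fix x y assume x: "x \<in> c0" and y: "y \<in> c0"
    have "J' x + J' y = (\<Sum>l. x l *\<^sub>R g l + y l *\<^sub>R g l)" unfolding J'_def by (rule suminf_add[OF summ[OF x] summ[OF y]])
    thus "J' (\<lambda>n. x n + y n) = J' x + J' y" unfolding J'_def by (simp add: scaleR_add_left)
  next
    fix c x assume x: "x \<in> c0"
    have "c *\<^sub>R J' x = (\<Sum>l. c *\<^sub>R (x l *\<^sub>R g l))" unfolding J'_def by (rule suminf_scaleR_right[OF summ[OF x]])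
    thus "J' (\<lambda>n. c * x n) = c *\<^sub>R J' x" unfolding J'_def by simp
  next
    show "\<exists>m M. 0 < m \<and> (\<forall>a\<in>c0. m * sup_norm a \<le> norm (J' a) \<and> norm (J' a) \<le> M * sup_norm a)"
    proof (intro exI conjI ballI)
      show "0 < 1 / (2 * c\<psi> * nT)" using c\<psi> nT by simp
    next
      fix x assume x: "x \<in> c0"
      have "sup_norm x \<le> 2 * c\<psi> * (norm (J' x) * nT)"
        using Lb[OF x] nT(2)[of "J' x"] c\<psi> by (meson mult_left_mono order_trans zero_le_mult_iff less_imp_le zero_less_numeral)
      thus "1 / (2 * c\<psi> * nT) * sup_norm x \<le> norm (J' x)" using c\<psi> nT by (simp add: field_simps)
      show "norm (J' x) \<le> Cu * sup_norm x" by (rule Ub[OF x])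
    qed
  qed
  have "\<forall>z\<in>J' ` c0. (1 / (2 * c\<psi> * Cu)) * norm z \<le> norm (T z)"
  proof
    fix z assume "z \<in> J' ` c0"
    then obtain x where x: "x \<in> c0" "z = J' x" by blast
    have "(1 / (2 * c\<psi> * Cu)) * norm z \<le> (1 / (2 * c\<psi> * Cu)) * (Cu * sup_norm x)"
      using Ub[OF x(1)] x(2) c\<psi> Cu by (intro mult_left_mono) auto
    also have "\<dots> = sup_norm x / (2 * c\<psi>)" using Cu by simp
    also have "\<dots> \<le> norm (T z)" using Lb[OF x(1)] x(2) c\<psi> by (simp add: field_simps)
    finally show "(1 / (2 * c\<psi> * Cu)) * norm z \<le> norm (T z)" .
  qed
  moreover have "1 / (2 * c\<psi> * Cu) > 0" using c\<psi> Cu by simp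
  ultimately show ?thesis unfolding fixes_copy_of_c0_def using emb by blast
qed

end

theorem corollary1p10:
  fixes E :: "nat \<Rightarrow> 'a::banach set" and K :: real and T :: "'a \<Rightarrow> 'b::banach"
  assumes "shrinking_fdd E" and "unconditional_fdd K E"
    and "bounded_linear T" and "surj T"
  shows "contains_c0 TYPE('b) \<longleftrightarrow> fixes_copy_of_c0 T"
proof
  assume "contains_c0 TYPE('b)"
  then obtain J :: "(nat \<Rightarrow> real) \<Rightarrow> 'b" where J: "c0_embedding J" unfolding contains_c0_def by blast
  have fdd: "is_fdd E" and sh: "is_fdd (fdd_dual E)" using assms(1) unfolding shrinking_fdd_def by blast+
  have "mainctx E K T J"
    unfolding mainctx_def mainctx_axioms_def ufddc_def ufddc_axioms_def fddc_def
    using fdd assms sh J by blast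
  then interpret mainctx E K T J .
  show "fixes_copy_of_c0 T" by (rule main_fix)
next
  assume "fixes_copy_of_c0 T"
  then obtain J :: "(nat \<Rightarrow> real) \<Rightarrow> 'a" and m where J: "c0_embedding J" and m: "m > 0"
    and Jm: "\<forall>z\<in>J ` c0. m * norm z \<le> norm (T z)"
    unfolding fixes_copy_of_c0_def by blast
  obtain mJ MJ where mJ: "0 < mJ" and Jb: "\<forall>a\<in>c0. mJ * sup_norm a \<le> norm (J a) \<and> norm (J a) \<le> MJ * sup_norm a"
    and Jadd: "\<forall>a\<in>c0. \<forall>b\<in>c0. J (\<lambda>n. a n + b n) = J a + J b"
    and Jscl: "\<forall>c. \<forall>a\<in>c0. J (\<lambda>n. c * a n) = c *\<^sub>R J a"
    using c0_emb_props[OF J] by blast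
  obtain nT where nT: "nT > 0" "\<And>x. norm (T x) \<le> norm x * nT"
    using bounded_linear.pos_bounded[OF assms(3)] by blast
  have Tl: "linear T" using assms(3) by (rule bounded_linear.linear)
  have "c0_embedding (\<lambda>a. T (J a))" unfolding c0_embedding_def
  proof (intro conjI ballI allI)
    fix a b assume "a \<in> c0" "b \<in> c0"
    thus "T (J (\<lambda>n. a n + b n)) = T (J a) + T (J b)" using Jadd linear_add[OF Tl] by simp
  next
    fix c a assume "a \<in> c0"
    thus "T (J (\<lambda>n. c * a n)) = c *\<^sub>R T (J a)" using Jscl linear_scale[OF Tl] by simp
  next
    show "\<exists>m' M'. 0 < m' \<and> (\<forall>a\<in>c0. m' * sup_norm a \<le> norm (T (J a)) \<and> norm (T (J a)) \<le> M' * sup_norm a)"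
    proof (intro exI conjI ballI)
      show "0 < m * mJ" using m mJ by simp
    next
      fix a assume a: "a \<in> c0"
      have "m * mJ * sup_norm a = m * (mJ * sup_norm a)" by simp
      also have "\<dots> \<le> m * norm (J a)" using Jb a m by (intro mult_left_mono) auto
      also have "\<dots> \<le> norm (T (J a))" using Jm a by blast
      finally show "m * mJ * sup_norm a \<le> norm (T (J a))" .
      have "norm (T (J a)) \<le> norm (J a) * nT" by (rule nT(2))
      also have "\<dots> \<le> (MJ * sup_norm a) * nT" using Jb a nT(1) by (intro mult_right_mono) auto
      also have "\<dots> = (nT * MJ) * sup_norm a" by simp
      finally show "norm (T (J a)) \<le> (nT * MJ) * sup_norm a" .
    qed
  qed
  thus "contains_c0 TYPE('b)" unfolding contains_c0_def by blast
qed


end
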